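(* Let $f:(L',\alpha_{L'})\to(L,\alpha_L)$ be an $\alpha$-cover and $C=\mathfrak{uce}_\alpha(f)(\mathrm{Ker}\,U_{\alpha'})\subseteq\mathrm{Ker}\,U_\alpha$. Then: (a) For any $d\in\mathrm{Der}(L,\alpha_L)$ there exists $\delta_d\in\mathrm{Der}(L',\alpha_{L'})$ with $f\circ\delta_d=d\circ f$ if and only if $\mathfrak{uce}_\alpha(d)(C)\subseteq C$. In that case $\delta_d$ is uniquely determined by $f\circ\delta_d=d\circ f$ and $\delta_d(\mathrm{Ker}\,f)\subseteq\mathrm{Ker}\,f$. (b) The map $\Delta:\{d\in\mathrm{Der}(L,\alpha_L):\mathfrak{uce}_\alpha(d)(C)\subseteq C\}\to\{\rho\in\mathrm{Der}(L',\alpha_{L'}):\rho(\mathrm{Ker}\,f)\subseteq\mathrm{Ker}\,f\}$, $d\mapsto\delta_d$, is a linear isomorphism. (c) For the $\alpha$-cover $U_\alpha:\mathfrak{uce}_\alpha(L)\to L$, the map $d\mapsto\mathfrak{uce}_\alpha(d)$ is a linear isomorphism $\mathrm{Der}(L,\alpha_L)\to\{\delta\in\mathrm{Der}(\mathfrak{uce}_\alpha(L),\overline{\alpha}):\delta(\mathrm{Ker}\,U_\alpha)\subseteq\mathrm{Ker}\,U_\alpha\}$.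
   Context: Hom-Leibniz algebras are multiplicative: $(L,\alpha_L)$ is a $\mathbb{K}$-vector space with bilinear bracket and linear $\alpha_L$ such that $[\alpha_L(x),[y,z]]=[[x,y],\alpha_L(z)]-[[x,z],\alpha_L(y)]$ and $\alpha_L[x,y]=[\alpha_L(x),\alpha_L(y)]$; homomorphisms preserve brackets and commute with structure maps. $\mathrm{Der}(L,\alpha_L)$ is the space of linear $d:L\to L$ with $d[x,y]=[\alpha_L(x),d(y)]+[d(x),\alpha_L(y)]$ and $d\circ\alpha_L=\alpha_L\circ d$. $Z(K)=\{x:[x,y]=0=[y,x]\ \forall y\}$. $(L,\alpha_L)$ is $\alpha$-perfect if $L=[\alpha_L(L),\alpha_L(L)]$. A central extension is a surjective homomorphism $\pi$ with $\mathrm{Ker}\,\pi\subseteq Z(K)$. An $\alpha$-cover is a central extension $f:(L',\alpha_{L'})\to(L,\alpha_L)$ with $(L',\alpha_{L'})$ $\alpha$-perfect (then $L$ is $\alpha$-perfect). For $\alpha$-perfect $(L,\alpha_L)$: $I_L\subseteq\alpha_L(L)\otimes\alpha_L(L)$ is spanned by $-[x_1,x_2]\otimes\alpha_L(x_3)+[x_1,x_3]\otimes\alpha_L(x_2)+\alpha_L(x_1)\otimes[x_2,x_3]$; $\mathfrak{uce}_\alpha(L)=(\alpha_L(L)\otimes\alpha_L(L))/I_L$ with classes $\{\alpha_L(x_1),\alpha_L(x_2)\}$, bracket $[\{a,b\},\{c,e\}]=\{[a,b],[c,e]\}$, endomorphism $\overline{\alpha}\{\alpha_L(x_1),\alpha_L(x_2)\}=\{\alpha_L^2(x_1),\alpha_L^2(x_2)\}$,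 $U_\alpha\{a,b\}=[a,b]$ (the universal $\alpha$-central extension); $U_{\alpha'}$ is the same for $L'$. $\mathfrak{uce}_\alpha(f)\{\alpha_{L'}(x_1),\alpha_{L'}(x_2)\}=\{\alpha_L(f(x_1)),\alpha_L(f(x_2))\}$, and for $d\in\mathrm{Der}(L,\alpha_L)$, $\mathfrak{uce}_\alpha(d)\{\alpha_L(x_1),\alpha_L(x_2)\}=\{d(\alpha_L(x_1)),\alpha_L^2(x_2)\}+\{\alpha_L^2(x_1),d(\alpha_L(x_2))\}$, a derivation of $\mathfrak{uce}_\alpha(L)$. *)

theory Defs
  imports Main "HOL-Library.Poly_Mapping" "HOL-Library.FuncSet"
begin

record ('k, 'a) hlalg =
  vcarr :: "'a set"
  vadd :: "'a \<Rightarrow> 'a \<Rightarrow> 'a"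
  vzero :: "'a"
  vsmult :: "'k \<Rightarrow> 'a \<Rightarrow> 'a"
  vbr :: "'a \<Rightarrow> 'a \<Rightarrow> 'a"
  valpha :: "'a \<Rightarrow> 'a"

definition vector_space_on :: "('k::field, 'a, 'm) hlalg_scheme \<Rightarrow> bool" where
  "vector_space_on L \<longleftrightarrow>
     vzero L \<in> vcarr L \<and>
     (\<forall>x\<in>vcarr L. \<forall>y\<in>vcarr L. vadd L x y \<in> vcarr L) \<and>
     (\<forall>c. \<forall>x\<in>vcarr L. vsmult L c x \<in> vcarr L) \<and>
     (\<forall>x\<in>vcarr L. \<forall>y\<in>vcarr L. \<forall>z\<in>vcarr L. vadd L (vadd L x y) z = vadd L x (vadd L y z)) \<and>
     (\<forall>x\<in>vcarr L. \<forall>y\<in>vcarr L. vadd L x y = vadd L y x) \<and>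
     (\<forall>x\<in>vcarr L. vadd L (vzero L) x = x) \<and>
     (\<forall>x\<in>vcarr L. \<exists>y\<in>vcarr L. vadd L x y = vzero L) \<and>
     (\<forall>c. \<forall>x\<in>vcarr L. \<forall>y\<in>vcarr L. vsmult L c (vadd L x y) = vadd L (vsmult L c x) (vsmult L c y)) \<and>
     (\<forall>c e. \<forall>x\<in>vcarr L. vsmult L (c + e) x = vadd L (vsmult L c x) (vsmult L e x)) \<and>
     (\<forall>c e. \<forall>x\<in>vcarr L. vsmult L (c * e) x = vsmult L c (vsmult L e x)) \<and>
     (\<forall>x\<in>vcarr L. vsmult L 1 x = x)"

definition hom_leibniz :: "('k::field, 'a, 'm) hlalg_scheme \<Rightarrow> bool" where
  "hom_leibniz L \<longleftrightarrow> vector_space_on L \<and>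
     (\<forall>x\<in>vcarr L. \<forall>y\<in>vcarr L. vbr L x y \<in> vcarr L) \<and>
     (\<forall>x\<in>vcarr L. valpha L x \<in> vcarr L) \<and>
     (\<forall>x\<in>vcarr L. \<forall>y\<in>vcarr L. \<forall>z\<in>vcarr L. vbr L (vadd L x y) z = vadd L (vbr L x z) (vbr L y z)) \<and>
     (\<forall>x\<in>vcarr L. \<forall>y\<in>vcarr L. \<forall>z\<in>vcarr L. vbr L x (vadd L y z) = vadd L (vbr L x y) (vbr L x z)) \<and>
     (\<forall>c. \<forall>x\<in>vcarr L. \<forall>y\<in>vcarr L. vbr L (vsmult L c x) y = vsmult L c (vbr L x y)) \<and>
     (\<forall>c. \<forall>x\<in>vcarr L. \<forall>y\<in>vcarr L. vbr L x (vsmult L c y) = vsmult L c (vbr L x y)) \<and>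
     (\<forall>x\<in>vcarr L. \<forall>y\<in>vcarr L. valpha L (vadd L x y) = vadd L (valpha L x) (valpha L y)) \<and>
     (\<forall>c. \<forall>x\<in>vcarr L. valpha L (vsmult L c x) = vsmult L c (valpha L x)) \<and>
     (\<forall>x\<in>vcarr L. \<forall>y\<in>vcarr L. \<forall>z\<in>vcarr L.
        vbr L (valpha L x) (vbr L y z) =
        vadd L (vbr L (vbr L x y) (valpha L z))
               (vsmult L (-1) (vbr L (vbr L x z) (valpha L y)))) \<and>
     (\<forall>x\<in>vcarr L. \<forall>y\<in>vcarr L. valpha L (vbr L x y) = vbr L (valpha L x) (valpha L y))"

definition hl_hom :: "('k::field, 'b, 'm) hlalg_scheme \<Rightarrow> ('k, 'a, 'n) hlalg_scheme \<Rightarrow> ('b \<Rightarrow> 'a) \<Rightarrow> bool" where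
  "hl_hom L' L f \<longleftrightarrow>
     (\<forall>x\<in>vcarr L'. f x \<in> vcarr L) \<and>
     (\<forall>x\<in>vcarr L'. \<forall>y\<in>vcarr L'. f (vadd L' x y) = vadd L (f x) (f y)) \<and>
     (\<forall>c. \<forall>x\<in>vcarr L'. f (vsmult L' c x) = vsmult L c (f x)) \<and>
     (\<forall>x\<in>vcarr L'. \<forall>y\<in>vcarr L'. f (vbr L' x y) = vbr L (f x) (f y)) \<and>
     (\<forall>x\<in>vcarr L'. f (valpha L' x) = valpha L (f x))"

definition hl_ker :: "('k, 'b, 'm) hlalg_scheme \<Rightarrow> ('k, 'a, 'n) hlalg_scheme \<Rightarrow> ('b \<Rightarrow> 'a) \<Rightarrow> 'b set" where
  "hl_ker L' L f = {x \<in> vcarr L'. f x = vzero L}"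

definition hl_center :: "('k, 'a, 'm) hlalg_scheme \<Rightarrow> 'a set" where
  "hl_center K = {x \<in> vcarr K. \<forall>y\<in>vcarr K. vbr K x y = vzero K \<and> vbr K y x = vzero K}"

inductive_set lspan :: "('k, 'a, 'm) hlalg_scheme \<Rightarrow> 'a set \<Rightarrow> 'a set" for L G where
  lspan_zero: "vzero L \<in> lspan L G"
| lspan_gen: "g \<in> G \<Longrightarrow> g \<in> lspan L G"
| lspan_add: "x \<in> lspan L G \<Longrightarrow> y \<in> lspan L G \<Longrightarrow> vadd L x y \<in> lspan L G"
| lspan_smult: "x \<in> lspan L G \<Longrightarrow> vsmult L c x \<in> lspan L G"

definition alpha_perfect :: "('k, 'a, 'm) hlalg_scheme \<Rightarrow> bool" where
  "alpha_perfect L \<longleftrightarrow>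
     vcarr L = lspan L {vbr L (valpha L x) (valpha L y) | x y. x \<in> vcarr L \<and> y \<in> vcarr L}"

definition central_ext :: "('k::field, 'b, 'm) hlalg_scheme \<Rightarrow> ('k, 'a, 'n) hlalg_scheme \<Rightarrow> ('b \<Rightarrow> 'a) \<Rightarrow> bool" where
  "central_ext K L f \<longleftrightarrow> hl_hom K L f \<and> f ` vcarr K = vcarr L \<and> hl_ker K L f \<subseteq> hl_center K"

definition alpha_cover :: "('k::field, 'b, 'm) hlalg_scheme \<Rightarrow> ('k, 'a, 'n) hlalg_scheme \<Rightarrow> ('b \<Rightarrow> 'a) \<Rightarrow> bool" where
  "alpha_cover L' L f \<longleftrightarrow> central_ext L' L f \<and> alpha_perfect L'"

text \<open>Derivations are taken as functions on the carrier (extensional: undefined outside),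
  so that Der(L) is a set of functions with pointwise linear structure.\<close>

definition Der :: "('k::field, 'a, 'm) hlalg_scheme \<Rightarrow> ('a \<Rightarrow> 'a) set" where
  "Der L = {d. d \<in> extensional (vcarr L) \<and>
     (\<forall>x\<in>vcarr L. d x \<in> vcarr L) \<and>
     (\<forall>x\<in>vcarr L. \<forall>y\<in>vcarr L. d (vadd L x y) = vadd L (d x) (d y)) \<and>
     (\<forall>c. \<forall>x\<in>vcarr L. d (vsmult L c x) = vsmult L c (d x)) \<and>
     (\<forall>x\<in>vcarr L. \<forall>y\<in>vcarr L.
        d (vbr L x y) = vadd L (vbr L (valpha L x) (d y)) (vbr L (d x) (valpha L y))) \<and>
     (\<forall>x\<in>vcarr L. d (valpha L x) = valpha L (d x))}"

definition der_add :: "('k, 'a, 'm) hlalg_scheme \<Rightarrow> ('a \<Rightarrow> 'a) \<Rightarrow> ('a \<Rightarrow> 'a) \<Rightarrow> ('a \<Rightarrow> 'a)" where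
  "der_add L d1 d2 = (\<lambda>x\<in>vcarr L. vadd L (d1 x) (d2 x))"

definition der_smult :: "('k, 'a, 'm) hlalg_scheme \<Rightarrow> 'k \<Rightarrow> ('a \<Rightarrow> 'a) \<Rightarrow> ('a \<Rightarrow> 'a)" where
  "der_smult L c d = (\<lambda>x\<in>vcarr L. vsmult L c (d x))"

definition der_lin_iso ::
  "('k, 'a, 'm) hlalg_scheme \<Rightarrow> ('k, 'b, 'n) hlalg_scheme \<Rightarrow> ('a \<Rightarrow> 'a) set \<Rightarrow> ('b \<Rightarrow> 'b) set
     \<Rightarrow> (('a \<Rightarrow> 'a) \<Rightarrow> ('b \<Rightarrow> 'b)) \<Rightarrow> bool" where
  "der_lin_iso L1 L2 S T \<Phi> \<longleftrightarrow> bij_betw \<Phi> S T \<and>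
     (\<forall>d1\<in>S. \<forall>d2\<in>S. \<Phi> (der_add L1 d1 d2) = der_add L2 (\<Phi> d1) (\<Phi> d2)) \<and>
     (\<forall>c. \<forall>d\<in>S. \<Phi> (der_smult L1 c d) = der_smult L2 c (\<Phi> d))"

text \<open>The derivation delta_d of L' lifting d along f (unique when it exists).\<close>
definition lift_der :: "('k::field, 'b, 'm) hlalg_scheme \<Rightarrow> ('b \<Rightarrow> 'a) \<Rightarrow> ('a \<Rightarrow> 'a) \<Rightarrow> ('b \<Rightarrow> 'b)" where
  "lift_der L' f d = (THE \<delta>. \<delta> \<in> Der L' \<and> (\<forall>x\<in>vcarr L'. f (\<delta> x) = d (f x)))"

text \<open>Free vector space on pairs: finitely supported maps.
  alpha(L) \<otimes> alpha(L) is the free space on alpha(L) \<times> alpha(L) modulo the bilinearity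
  relations; uce_alpha(L) is further divided by (the preimage of) I_L.  Elements of
  uce_alpha(L) are the cosets.\<close>

definition psm :: "'k::field \<Rightarrow> ('x \<Rightarrow>\<^sub>0 'k) \<Rightarrow> ('x \<Rightarrow>\<^sub>0 'k)" where
  "psm c v = Poly_Mapping.map (\<lambda>t. c * t) v"

definition gen :: "'a \<Rightarrow> 'a \<Rightarrow> ('a \<times> 'a \<Rightarrow>\<^sub>0 'k::field)" where
  "gen a b = Poly_Mapping.single (a, b) 1"

definition pmlin :: "('a \<times> 'a \<Rightarrow> ('b \<times> 'b \<Rightarrow>\<^sub>0 'k::field)) \<Rightarrow> ('a \<times> 'a \<Rightarrow>\<^sub>0 'k) \<Rightarrow> ('b \<times> 'b \<Rightarrow>\<^sub>0 'k)" where
  "pmlin h v = (\<Sum>p\<in>Poly_Mapping.keys v. psm (Poly_Mapping.lookup v p) (h p))"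

inductive_set pspan :: "('x \<Rightarrow>\<^sub>0 'k::field) set \<Rightarrow> ('x \<Rightarrow>\<^sub>0 'k) set" for G where
  pspan_zero: "0 \<in> pspan G"
| pspan_gen: "g \<in> G \<Longrightarrow> g \<in> pspan G"
| pspan_add: "v \<in> pspan G \<Longrightarrow> w \<in> pspan G \<Longrightarrow> v + w \<in> pspan G"
| pspan_smult: "v \<in> pspan G \<Longrightarrow> psm c v \<in> pspan G"

definition free_on :: "'a set \<Rightarrow> ('a \<times> 'a \<Rightarrow>\<^sub>0 'k::field) set" where
  "free_on A = {v. Poly_Mapping.keys v \<subseteq> A \<times> A}"

definition tensor_rels :: "('k::field, 'a, 'm) hlalg_scheme \<Rightarrow> ('a \<times> 'a \<Rightarrow>\<^sub>0 'k) set" where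
  "tensor_rels L = (let A = valpha L ` vcarr L in
      {gen (vadd L a a') b - gen a b - gen a' b | a a' b. a \<in> A \<and> a' \<in> A \<and> b \<in> A}
    \<union> {gen a (vadd L b b') - gen a b - gen a b' | a b b'. a \<in> A \<and> b \<in> A \<and> b' \<in> A}
    \<union> {gen (vsmult L c a) b - psm c (gen a b) | c a b. a \<in> A \<and> b \<in> A}
    \<union> {gen a (vsmult L c b) - psm c (gen a b) | c a b. a \<in> A \<and> b \<in> A})"

definition I_gens :: "('k::field, 'a, 'm) hlalg_scheme \<Rightarrow> ('a \<times> 'a \<Rightarrow>\<^sub>0 'k) set" where
  "I_gens L = {- gen (vbr L x1 x2) (valpha L x3) + gen (vbr L x1 x3) (valpha L x2)
                 + gen (valpha L x1) (vbr L x2 x3) | x1 x2 x3.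
               x1 \<in> vcarr L \<and> x2 \<in> vcarr L \<and> x3 \<in> vcarr L}"

definition uce_rel :: "('k::field, 'a, 'm) hlalg_scheme \<Rightarrow> ('a \<times> 'a \<Rightarrow>\<^sub>0 'k) set" where
  "uce_rel L = pspan (tensor_rels L \<union> I_gens L)"

definition ucls :: "('k::field, 'a, 'm) hlalg_scheme \<Rightarrow> ('a \<times> 'a \<Rightarrow>\<^sub>0 'k) \<Rightarrow> ('a \<times> 'a \<Rightarrow>\<^sub>0 'k) set" where
  "ucls L v = (\<lambda>r. v + r) ` uce_rel L"

definition urep :: "'x set \<Rightarrow> 'x" where
  "urep X = (SOME v. v \<in> X)"

definition uce :: "('k::field, 'a, 'm) hlalg_scheme \<Rightarrow> ('k, ('a \<times> 'a \<Rightarrow>\<^sub>0 'k) set) hlalg" where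
  "uce L = \<lparr> vcarr = ucls L ` free_on (valpha L ` vcarr L),
     vadd = (\<lambda>X Y. ucls L (urep X + urep Y)),
     vzero = ucls L 0,
     vsmult = (\<lambda>c X. ucls L (psm c (urep X))),
     vbr = (\<lambda>X Y. ucls L (pmlin (\<lambda>p. pmlin (\<lambda>q. gen (vbr L (fst p) (snd p)) (vbr L (fst q) (snd q)))
                                    (urep Y)) (urep X))),
     valpha = (\<lambda>X. ucls L (pmlin (\<lambda>p. gen (valpha L (fst p)) (valpha L (snd p))) (urep X))) \<rparr>"

definition lsum :: "('k, 'a, 'm) hlalg_scheme \<Rightarrow> ('x \<Rightarrow> 'a) \<Rightarrow> 'x set \<Rightarrow> 'a" where
  "lsum L g S = Finite_Set.fold (\<lambda>x acc. vadd L (g x) acc) (vzero L) S"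

definition uceU :: "('k::field, 'a, 'm) hlalg_scheme \<Rightarrow> ('a \<times> 'a \<Rightarrow>\<^sub>0 'k) set \<Rightarrow> 'a" where
  "uceU L X = (let v = urep X in
     lsum L (\<lambda>p. vsmult L (Poly_Mapping.lookup v p) (vbr L (fst p) (snd p))) (Poly_Mapping.keys v))"

text \<open>uce_alpha(f) : {alpha'(x1), alpha'(x2)} \<mapsto> {alpha(f x1), alpha(f x2)}; for a homomorphism f,
  alpha(f x) = f(alpha' x), so on classes {a,b} (a,b in alpha'(L')) this is {f a, f b}.\<close>
definition uce_map :: "('k::field, 'a, 'm) hlalg_scheme \<Rightarrow> ('b \<Rightarrow> 'a)
     \<Rightarrow> ('b \<times> 'b \<Rightarrow>\<^sub>0 'k) set \<Rightarrow> ('a \<times> 'a \<Rightarrow>\<^sub>0 'k) set" where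
  "uce_map L f X = ucls L (pmlin (\<lambda>p. gen (f (fst p)) (f (snd p))) (urep X))"

definition uce_der :: "('k::field, 'a, 'm) hlalg_scheme \<Rightarrow> ('a \<Rightarrow> 'a)
     \<Rightarrow> ('a \<times> 'a \<Rightarrow>\<^sub>0 'k) set \<Rightarrow> ('a \<times> 'a \<Rightarrow>\<^sub>0 'k) set" where
  "uce_der L d = (\<lambda>X\<in>vcarr (uce L).
     ucls L (pmlin (\<lambda>p. gen (d (fst p)) (valpha L (snd p)) + gen (valpha L (fst p)) (d (snd p))) (urep X)))"

end

theory Submission
  imports Defs
begin


section \<open>Vector spaces on carriers\<close>

locale vs =
  fixes V :: "('k::field, 'a, 'm) hlalg_scheme"
  assumes vs: "vector_space_on V"
begin

lemmas vsf = vs[unfolded vector_space_on_def]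

lemma zero_in[simp]: "vzero V \<in> vcarr V" using vsf[THEN conjunct1] by blast
lemma add_in[simp]: "x \<in> vcarr V \<Longrightarrow> y \<in> vcarr V \<Longrightarrow> vadd V x y \<in> vcarr V"
  using vsf[THEN conjunct2, THEN conjunct1] by blast
lemma sm_in[simp]: "x \<in> vcarr V \<Longrightarrow> vsmult V c x \<in> vcarr V"
  using vsf[THEN conjunct2, THEN conjunct2, THEN conjunct1] by blast
lemma add_assoc: "x \<in> vcarr V \<Longrightarrow> y \<in> vcarr V \<Longrightarrow> z \<in> vcarr V \<Longrightarrow>
   vadd V (vadd V x y) z = vadd V x (vadd V y z)"
  using vsf[THEN conjunct2, THEN conjunct2, THEN conjunct2, THEN conjunct1] by blast
lemma add_comm: "x \<in> vcarr V \<Longrightarrow> y \<in> vcarr V \<Longrightarrow> vadd V x y = vadd V y x"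
  using vsf[THEN conjunct2, THEN conjunct2, THEN conjunct2, THEN conjunct2, THEN conjunct1] by blast
lemma zero_add[simp]: "x \<in> vcarr V \<Longrightarrow> vadd V (vzero V) x = x"
  using vsf[THEN conjunct2, THEN conjunct2, THEN conjunct2, THEN conjunct2, THEN conjunct2, THEN conjunct1] by blast
lemma add_zero[simp]: "x \<in> vcarr V \<Longrightarrow> vadd V x (vzero V) = x"
  using add_comm zero_add zero_in by metis
lemma ex_neg: "x \<in> vcarr V \<Longrightarrow> \<exists>y\<in>vcarr V. vadd V x y = vzero V"
  using vsf[THEN conjunct2, THEN conjunct2, THEN conjunct2, THEN conjunct2, THEN conjunct2, THEN conjunct2, THEN conjunct1] by blast
lemma sm_add: "x \<in> vcarr V \<Longrightarrow> y \<in> vcarr V \<Longrightarrow>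
   vsmult V c (vadd V x y) = vadd V (vsmult V c x) (vsmult V c y)"
  using vsf[THEN conjunct2, THEN conjunct2, THEN conjunct2, THEN conjunct2, THEN conjunct2, THEN conjunct2, THEN conjunct2, THEN conjunct1] by blast
lemma add_sm: "x \<in> vcarr V \<Longrightarrow> vsmult V (c + e) x = vadd V (vsmult V c x) (vsmult V e x)"
  using vsf[THEN conjunct2, THEN conjunct2, THEN conjunct2, THEN conjunct2, THEN conjunct2, THEN conjunct2, THEN conjunct2, THEN conjunct2, THEN conjunct1] by blast
lemma sm_sm: "x \<in> vcarr V \<Longrightarrow> vsmult V (c * e) x = vsmult V c (vsmult V e x)"
  using vsf[THEN conjunct2, THEN conjunct2, THEN conjunct2, THEN conjunct2, THEN conjunct2, THEN conjunct2, THEN conjunct2, THEN conjunct2, THEN conjunct2, THEN conjunct1] by blast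
lemma sm_one[simp]: "x \<in> vcarr V \<Longrightarrow> vsmult V 1 x = x"
  using vsf[THEN conjunct2, THEN conjunct2, THEN conjunct2, THEN conjunct2, THEN conjunct2, THEN conjunct2, THEN conjunct2, THEN conjunct2, THEN conjunct2, THEN conjunct2] by blast

lemma add_lcomm: "x \<in> vcarr V \<Longrightarrow> y \<in> vcarr V \<Longrightarrow> z \<in> vcarr V \<Longrightarrow>
   vadd V x (vadd V y z) = vadd V y (vadd V x z)"
  by (metis add_assoc add_comm)

lemma add_swap4: "a \<in> vcarr V \<Longrightarrow> b \<in> vcarr V \<Longrightarrow> c \<in> vcarr V \<Longrightarrow> d \<in> vcarr V \<Longrightarrow>
   vadd V (vadd V a b) (vadd V c d) = vadd V (vadd V a c) (vadd V b d)"
  by (simp add: add_assoc add_lcomm)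

lemma add_left_cancel:
  assumes "x \<in> vcarr V" "y \<in> vcarr V" "z \<in> vcarr V" "vadd V x y = vadd V x z"
  shows "y = z"
proof -
  obtain x' where x': "x' \<in> vcarr V" "vadd V x x' = vzero V" using ex_neg assms(1) by blast
  have "y = vadd V (vadd V x' x) y" using x' assms by (simp add: add_comm)
  also have "\<dots> = vadd V x' (vadd V x z)" using x' assms by (simp add: add_assoc)
  also have "\<dots> = vadd V (vadd V x' x) z" using x' assms by (simp add: add_assoc)
  also have "\<dots> = z" using x' assms by (simp add: add_comm)
  finally show ?thesis .
qed

lemma sm_zero_left[simp]: assumes "x \<in> vcarr V" shows "vsmult V 0 x = vzero V"
proof -
  have "vadd V (vsmult V 0 x) (vsmult V 0 x) = vadd V (vsmult V 0 x) (vzero V)"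
    using add_sm[of x 0 0] assms by simp
  note h = this
  show ?thesis using add_left_cancel[OF _ _ _ h] assms by simp
qed

lemma sm_zero_right[simp]: "vsmult V c (vzero V) = vzero V"
proof -
  have "vadd V (vsmult V c (vzero V)) (vsmult V c (vzero V)) = vadd V (vsmult V c (vzero V)) (vzero V)"
    using sm_add[of "vzero V" "vzero V" c] by simp
  note h = this
  show ?thesis using add_left_cancel[OF _ _ _ h] by simp
qed

lemma add_neg[simp]: "x \<in> vcarr V \<Longrightarrow> vadd V x (vsmult V (-1) x) = vzero V"
  using add_sm[of x 1 "-1"] by simp

lemma neg_add[simp]: "x \<in> vcarr V \<Longrightarrow> vadd V (vsmult V (-1) x) x = vzero V"
  using add_neg add_comm by (metis sm_in)

lemma diff_zero_eq:
  assumes "x \<in> vcarr V" "y \<in> vcarr V" "vadd V x (vsmult V (-1) y) = vzero V"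
  shows "x = y"
proof -
  have "x = vadd V x (vadd V (vsmult V (-1) y) y)" using assms by simp
  also have "\<dots> = vadd V (vadd V x (vsmult V (-1) y)) y" by (metis add_assoc sm_in assms(1,2))
  also have "\<dots> = y" using assms by simp
  finally show ?thesis .
qed

lemma decomp: "x \<in> vcarr V \<Longrightarrow> y \<in> vcarr V \<Longrightarrow> x = vadd V y (vadd V x (vsmult V (-1) y))"
  by (metis add_assoc add_comm add_in neg_add sm_in zero_add)

lemma lsum_empty[simp]: "lsum V g {} = vzero V" by (simp add: lsum_def)

definition Gf :: "('x \<Rightarrow> 'a) \<Rightarrow> 'x \<Rightarrow> 'a \<Rightarrow> 'a" where
  "Gf g x acc = vadd V (g x) (if acc \<in> vcarr V then acc else vzero V)"

lemma lsum_Gf: "g ` S \<subseteq> vcarr V \<Longrightarrow> lsum V g S = Finite_Set.fold (Gf g) (vzero V) S"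
  unfolding lsum_def by (rule fold_closed_eq[where B="vcarr V"]) (auto simp: Gf_def)

lemma cfc: "g ` S \<subseteq> vcarr V \<Longrightarrow> comp_fun_commute_on S (Gf g)"
  unfolding comp_fun_commute_on_def fun_eq_iff Gf_def by (auto simp: image_subset_iff intro!: add_lcomm add_comm)

lemma fold_Gf_insert:
  assumes "finite S" "x \<notin> S" "g ` insert x S \<subseteq> vcarr V"
  shows "Finite_Set.fold (Gf g) (vzero V) (insert x S) = Gf g x (Finite_Set.fold (Gf g) (vzero V) S)"
  using comp_fun_commute_on.fold_insert[OF cfc[OF assms(3)] _ assms(1,2)] by simp

lemma Gf_in[simp]: "g x \<in> vcarr V \<Longrightarrow> Gf g x acc \<in> vcarr V"
  by (simp add: Gf_def)

lemma fold_Gf_in: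
  assumes "finite S" "g ` S \<subseteq> vcarr V"
  shows "Finite_Set.fold (Gf g) (vzero V) S \<in> vcarr V"
  using assms
proof (induction S rule: finite_induct)
  case (insert x F)
  then show ?case using fold_Gf_insert[OF insert(1,2) insert(4)] by simp
qed simp

lemma lsum_in[simp]: "g ` S \<subseteq> vcarr V \<Longrightarrow> lsum V g S \<in> vcarr V"
proof (cases "finite S")
  case True
  assume "g ` S \<subseteq> vcarr V"
  then show ?thesis using True lsum_Gf fold_Gf_in by metis
qed (simp add: lsum_def)

lemma lsum_insert:
  assumes "finite S" "x \<notin> S" "g ` insert x S \<subseteq> vcarr V"
  shows "lsum V g (insert x S) = vadd V (g x) (lsum V g S)"
proof -
  have "g ` S \<subseteq> vcarr V" using assms by auto
  then show ?thesis using assms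
    by (simp add: lsum_Gf fold_Gf_insert Gf_def fold_Gf_in)
qed

lemma lsum_cong: "(\<And>x. x \<in> S \<Longrightarrow> g x = h x) \<Longrightarrow> lsum V g S = lsum V h S"
  unfolding lsum_def by (rule fold_closed_eq[where B=UNIV]) auto

lemma lsum_single[simp]: "g x \<in> vcarr V \<Longrightarrow> lsum V g {x} = g x"
  using lsum_insert[of "{}" x g] by simp

lemma lsum_add:
  assumes "finite S" "g ` S \<subseteq> vcarr V" "h ` S \<subseteq> vcarr V"
  shows "lsum V (\<lambda>x. vadd V (g x) (h x)) S = vadd V (lsum V g S) (lsum V h S)"
  using assms
proof (induction S rule: finite_induct)
  case (insert x F)
  have "(\<lambda>x. vadd V (g x) (h x)) ` insert x F \<subseteq> vcarr V" using insert.prems by (auto simp: image_subset_iff)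
  then show ?case using insert by (simp add: lsum_insert add_swap4)
qed simp

lemma lsum_sm:
  assumes "finite S" "g ` S \<subseteq> vcarr V"
  shows "lsum V (\<lambda>x. vsmult V c (g x)) S = vsmult V c (lsum V g S)"
  using assms
proof (induction S rule: finite_induct)
  case (insert x F)
  have "(\<lambda>x. vsmult V c (g x)) ` insert x F \<subseteq> vcarr V" using insert.prems by (auto simp: image_subset_iff)
  then show ?case using insert by (simp add: lsum_insert sm_add)
qed simp

lemma lsum_zero: "(\<And>x. x \<in> S \<Longrightarrow> g x = vzero V) \<Longrightarrow> lsum V g S = vzero V"
proof -
  assume a: "\<And>x. x \<in> S \<Longrightarrow> g x = vzero V"
  have "lsum V g S = lsum V (\<lambda>_. vzero V) S" by (rule lsum_cong) (simp add: a)
  moreover have "finite S \<Longrightarrow> lsum V (\<lambda>_. vzero V) S = vzero V"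
  proof (induction S rule: finite_induct)
    case (insert x F)
    then show ?case using lsum_insert[of F x "\<lambda>_. vzero V"] by (simp add: image_subset_iff)
  qed simp
  ultimately show ?thesis by (cases "finite S") (auto simp: lsum_def)
qed

lemma lsum_Un:
  assumes "finite S" "finite T" "S \<inter> T = {}" "g ` (S \<union> T) \<subseteq> vcarr V"
  shows "lsum V g (S \<union> T) = vadd V (lsum V g S) (lsum V g T)"
  using assms
proof (induction S rule: finite_induct)
  case empty
  then show ?case by simp
next
  case (insert x F)
  have "g ` F \<subseteq> vcarr V" "g ` T \<subseteq> vcarr V" "g x \<in> vcarr V" using insert.prems by auto
  then show ?case using insert by (simp add: lsum_insert add_assoc)
qed

lemma lsum_mono_neutral:
  assumes "finite T" "S \<subseteq> T" "\<And>x. x \<in> T - S \<Longrightarrow> g x = vzero V" "g ` T \<subseteq> vcarr V"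
  shows "lsum V g T = lsum V g S"
proof -
  have "T = S \<union> (T - S)" using assms by auto
  then have "lsum V g T = vadd V (lsum V g S) (lsum V g (T - S))"
    using lsum_Un[of S "T - S" g] assms by (metis Diff_disjoint finite_Diff finite_subset)
  also have "lsum V g (T - S) = vzero V" by (rule lsum_zero) (simp add: assms)
  moreover have "lsum V g S \<in> vcarr V" using assms by (intro lsum_in) auto
  ultimately show ?thesis by simp
qed

end


context vs begin

definition Lin :: "('x \<Rightarrow> 'a) \<Rightarrow> ('x \<Rightarrow>\<^sub>0 'k) \<Rightarrow> 'a" where
  "Lin g v = lsum V (\<lambda>p. vsmult V (Poly_Mapping.lookup v p) (g p)) (Poly_Mapping.keys v)"

lemma Lin_in[simp]: "(\<And>p. g p \<in> vcarr V) \<Longrightarrow> Lin g v \<in> vcarr V"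
  unfolding Lin_def by (rule lsum_in) auto

lemma Lin_super:
  assumes "finite S" "Poly_Mapping.keys v \<subseteq> S" "\<And>p. g p \<in> vcarr V"
  shows "Lin g v = lsum V (\<lambda>p. vsmult V (Poly_Mapping.lookup v p) (g p)) S"
  unfolding Lin_def using assms
  by (intro lsum_mono_neutral[symmetric]) (auto simp: in_keys_iff)

lemma Lin_add:
  assumes "\<And>p. g p \<in> vcarr V"
  shows "Lin g (v + w) = vadd V (Lin g v) (Lin g w)"
proof -
  let ?S = "Poly_Mapping.keys v \<union> Poly_Mapping.keys w"
  have "Lin g (v + w) = lsum V (\<lambda>p. vsmult V (Poly_Mapping.lookup (v + w) p) (g p)) ?S"
    using assms keys_add[of v w] by (intro Lin_super) auto
  also have "\<dots> = lsum V (\<lambda>p. vadd V (vsmult V (Poly_Mapping.lookup v p) (g p))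
                                  (vsmult V (Poly_Mapping.lookup w p) (g p))) ?S"
    by (rule lsum_cong) (simp add: lookup_add add_sm assms)
  also have "\<dots> = vadd V (lsum V (\<lambda>p. vsmult V (Poly_Mapping.lookup v p) (g p)) ?S)
                          (lsum V (\<lambda>p. vsmult V (Poly_Mapping.lookup w p) (g p)) ?S)"
    by (rule lsum_add) (auto simp: assms)
  also have "\<dots> = vadd V (Lin g v) (Lin g w)"
  proof -
    have "Lin g v = lsum V (\<lambda>p. vsmult V (Poly_Mapping.lookup v p) (g p)) ?S"
      by (rule Lin_super) (auto simp: assms)
    moreover have "Lin g w = lsum V (\<lambda>p. vsmult V (Poly_Mapping.lookup w p) (g p)) ?S"
      by (rule Lin_super) (auto simp: assms)
    ultimately show ?thesis by simp
  qed
  finally show ?thesis .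
qed

lemma lookup_psm[simp]: "Poly_Mapping.lookup (psm c v) p = c * Poly_Mapping.lookup v p"
  by (simp add: psm_def Poly_Mapping.map.rep_eq when_def)

lemma keys_psm: "Poly_Mapping.keys (psm c v) \<subseteq> Poly_Mapping.keys v"
  by (auto simp: in_keys_iff)

lemma Lin_psm:
  assumes "\<And>p. g p \<in> vcarr V"
  shows "Lin g (psm c v) = vsmult V c (Lin g v)"
proof -
  have "Lin g (psm c v) = lsum V (\<lambda>p. vsmult V (Poly_Mapping.lookup (psm c v) p) (g p)) (Poly_Mapping.keys v)"
    using assms keys_psm[of c v] by (intro Lin_super) auto
  also have "\<dots> = lsum V (\<lambda>p. vsmult V c (vsmult V (Poly_Mapping.lookup v p) (g p))) (Poly_Mapping.keys v)"
    by (rule lsum_cong) (simp add: sm_sm assms)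
  also have "\<dots> = vsmult V c (Lin g v)"
    unfolding Lin_def by (rule lsum_sm) (auto simp: assms)
  finally show ?thesis .
qed

lemma Lin_zero[simp]: "Lin g 0 = vzero V"
  by (simp add: Lin_def)

lemma Lin_single:
  assumes "\<And>p. g p \<in> vcarr V"
  shows "Lin g (Poly_Mapping.single p c) = vsmult V c (g p)"
proof -
  have "Lin g (Poly_Mapping.single p c) = lsum V (\<lambda>q. vsmult V (Poly_Mapping.lookup (Poly_Mapping.single p c) q) (g q)) {p}"
    using assms by (intro Lin_super) auto
  then show ?thesis using assms by simp
qed

lemma Lin_cong: "(\<And>p. p \<in> Poly_Mapping.keys v \<Longrightarrow> g p = g' p) \<Longrightarrow> Lin g v = Lin g' v"
  unfolding Lin_def by (rule lsum_cong) simp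

lemma Lin_sum:
  assumes "finite I" "\<And>p. g p \<in> vcarr V"
  shows "Lin g (sum F I) = lsum V (\<lambda>i. Lin g (F i)) I"
  using assms(1)
proof (induction I rule: finite_induct)
  case (insert x F')
  then show ?case using assms(2) by (simp add: Lin_add lsum_insert image_subset_iff)
qed simp

end

subsection \<open>The free space as a vector space\<close>

lemma lookup_psm[simp]: "Poly_Mapping.lookup (psm c v) p = c * Poly_Mapping.lookup v p"
  by (simp add: psm_def Poly_Mapping.map.rep_eq when_def)

lemma psm_add_right: "psm c (v + w) = psm c v + psm c w"
  by (rule poly_mapping_eqI) (simp add: lookup_add distrib_left)
lemma psm_add_left: "psm (c + e) v = psm c v + psm e v"
  by (rule poly_mapping_eqI) (simp add: lookup_add distrib_right)
lemma psm_psm[simp]: "psm c (psm e v) = psm (c * e) v"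
  by (rule poly_mapping_eqI) simp
lemma psm_one[simp]: "psm 1 v = v"
  by (rule poly_mapping_eqI) simp
lemma psm_zero_left[simp]: "psm 0 v = 0"
  by (rule poly_mapping_eqI) simp
lemma psm_zero_right[simp]: "psm c 0 = 0"
  by (rule poly_mapping_eqI) simp
lemma psm_minus_one: "psm (-1) v = - v"
  by (rule poly_mapping_eqI) simp
lemma psm_minus: "psm c (- v) = - psm c v"
  by (rule poly_mapping_eqI) simp
lemma psm_diff: "psm c (v - w) = psm c v - psm c w"
  by (rule poly_mapping_eqI) (simp add: lookup_minus right_diff_distrib)
lemma psm_single: "psm c (Poly_Mapping.single p e) = Poly_Mapping.single p (c * e)"
  by (rule poly_mapping_eqI) (simp add: lookup_single when_def)
lemma keys_psm: "Poly_Mapping.keys (psm c v) \<subseteq> Poly_Mapping.keys v"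
  by (auto simp: in_keys_iff)
lemma psm_sum: "psm c (sum F I) = sum (\<lambda>i. psm c (F i)) I"
  by (rule poly_mapping_eqI) (simp add: lookup_sum sum_distrib_left)

definition PM :: "('k::field, 'x \<Rightarrow>\<^sub>0 'k) hlalg" where
  "PM = \<lparr>vcarr = UNIV, vadd = (+), vzero = 0, vsmult = psm, vbr = (\<lambda>x y. 0), valpha = (\<lambda>x. x)\<rparr>"

lemma PM_simps[simp]: "vcarr PM = UNIV" "vadd PM = (+)" "vzero PM = 0" "vsmult PM = psm"
  by (simp_all add: PM_def)

lemma vs_PM: "vs (PM :: ('k::field, 'x \<Rightarrow>\<^sub>0 'k) hlalg)"
proof -
  have "\<forall>x::'x\<Rightarrow>\<^sub>0'k. \<exists>y. x + y = 0" by (metis right_minus)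
  then show ?thesis unfolding vs_def vector_space_on_def
    by (simp add: psm_add_right psm_add_left add.assoc add.commute)
qed

interpretation PMv: vs "PM :: ('k::field, 'x \<Rightarrow>\<^sub>0 'k) hlalg" by (rule vs_PM)

lemma lsum_PM: "lsum PM g S = sum g S"
  by (simp add: lsum_def sum.eq_fold o_def)

lemma pmlin_Lin: "pmlin h v = PMv.Lin h v"
  by (simp add: pmlin_def PMv.Lin_def lsum_PM)

lemma pmlin_add: "pmlin h (v + w) = pmlin h v + pmlin h w"
  by (simp add: pmlin_Lin PMv.Lin_add)
lemma pmlin_psm: "pmlin h (psm c v) = psm c (pmlin h v)"
  by (simp add: pmlin_Lin PMv.Lin_psm)
lemma pmlin_zero[simp]: "pmlin h 0 = 0"
  by (simp add: pmlin_Lin)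
lemma pmlin_single: "pmlin h (Poly_Mapping.single p c) = psm c (h p)"
  by (simp add: pmlin_Lin PMv.Lin_single)
lemma pmlin_minus: "pmlin h (- v) = - pmlin h v"
  by (metis pmlin_psm psm_minus_one)
lemma pmlin_diff: "pmlin h (v - w) = pmlin h v - pmlin h w"
  by (metis diff_conv_add_uminus pmlin_add pmlin_minus)
lemma pmlin_cong: "(\<And>p. p \<in> Poly_Mapping.keys v \<Longrightarrow> g p = g' p) \<Longrightarrow> pmlin g v = pmlin g' v"
  by (simp add: pmlin_def)
lemma pmlin_sum: "finite I \<Longrightarrow> pmlin h (sum F I) = sum (\<lambda>i. pmlin h (F i)) I"
  by (simp add: pmlin_Lin PMv.Lin_sum lsum_PM)

lemma gen_single: "gen a b = Poly_Mapping.single (a, b) 1"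
  by (simp add: gen_def)
lemma pmlin_gen[simp]: "pmlin h (gen a b) = h (a, b)"
  by (simp add: gen_def pmlin_single)
lemma psm_gen: "psm c (gen a b) = Poly_Mapping.single (a, b) c"
  by (simp add: gen_def psm_single)

lemma pmlin_fun_add: "pmlin (\<lambda>p. g p + h p) v = pmlin g v + pmlin h v"
  by (simp add: pmlin_def psm_add_right sum.distrib)
lemma pmlin_fun_diff: "pmlin (\<lambda>p. g p - h p) v = pmlin g v - pmlin h v"
  by (simp add: pmlin_def psm_diff sum_subtractf)
lemma pmlin_fun_psm: "pmlin (\<lambda>p. psm c (g p)) v = psm c (pmlin g v)"
  by (simp add: pmlin_def psm_sum mult.commute)

lemma pm_expand: "v = (\<Sum>p\<in>Poly_Mapping.keys v. Poly_Mapping.single p (Poly_Mapping.lookup v p))"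
  by (rule poly_mapping_eqI)
     (auto simp: lookup_sum lookup_single when_def in_keys_iff sum.delta[OF finite_keys])

lemma pm_induct[consumes 1, case_names zero step]:
  fixes v :: "'x \<Rightarrow>\<^sub>0 'k::field"
  assumes "Poly_Mapping.keys v \<subseteq> K" "P 0"
    "\<And>p c w. p \<in> K \<Longrightarrow> Poly_Mapping.keys w \<subseteq> K \<Longrightarrow> P w \<Longrightarrow> P (Poly_Mapping.single p c + w)"
  shows "P v"
proof -
  have "finite I \<Longrightarrow> I \<subseteq> K \<Longrightarrow> P (\<Sum>p\<in>I. Poly_Mapping.single p (cf p)) \<and>
      Poly_Mapping.keys (\<Sum>p\<in>I. Poly_Mapping.single p (cf p)) \<subseteq> K" for I cf
  proof (induction I rule: finite_induct)
    case (insert x F)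
    then have "P (Poly_Mapping.single x (cf x) + (\<Sum>p\<in>F. Poly_Mapping.single p (cf p)))"
      using assms(3) by auto
    moreover have "Poly_Mapping.keys (Poly_Mapping.single x (cf x) + (\<Sum>p\<in>F. Poly_Mapping.single p (cf p))) \<subseteq> K"
    proof -
      have "Poly_Mapping.keys (Poly_Mapping.single x (cf x)) \<subseteq> {x}" by simp
      then show ?thesis
        using insert keys_add[of "Poly_Mapping.single x (cf x)" "\<Sum>p\<in>F. Poly_Mapping.single p (cf p)"]
        by blast
    qed
    ultimately show ?case using insert by simp
  qed (simp add: assms(2))
  from this[of "Poly_Mapping.keys v" "Poly_Mapping.lookup v"]
  have "P (\<Sum>p\<in>Poly_Mapping.keys v. Poly_Mapping.single p (Poly_Mapping.lookup v p))"
    using assms(1) by simp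
  then show ?thesis by (simp only: pm_expand[symmetric])
qed

lemma Lin_pmlin:
  assumes "vs V" "\<And>p. g p \<in> vcarr V"
  shows "vs.Lin V g (pmlin h v) = vs.Lin V (\<lambda>p. vs.Lin V g (h p)) v"
proof -
  interpret vs V by fact
  have "Lin g (pmlin h v) = Lin g (\<Sum>p\<in>Poly_Mapping.keys v. psm (Poly_Mapping.lookup v p) (h p))"
    by (simp add: pmlin_def)
  also have "\<dots> = lsum V (\<lambda>p. Lin g (psm (Poly_Mapping.lookup v p) (h p))) (Poly_Mapping.keys v)"
    using assms by (simp add: Lin_sum)
  also have "\<dots> = Lin (\<lambda>p. Lin g (h p)) v"
    unfolding Lin_def[of "\<lambda>p. Lin g (h p)"] by (rule lsum_cong) (simp add: Lin_psm assms)
  finally show ?thesis .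
qed

lemma pmlin_pmlin: "pmlin g (pmlin h v) = pmlin (\<lambda>p. pmlin g (h p)) v"
  using Lin_pmlin[OF vs_PM, of g h v] by (simp add: pmlin_Lin)


lemma lsum_empty_g[simp]: "lsum V g {} = vzero V" by (simp add: lsum_def)

definition lin_on :: "('k, 'a, 'm) hlalg_scheme \<Rightarrow> ('k, 'b, 'n) hlalg_scheme \<Rightarrow> ('a \<Rightarrow> 'b) \<Rightarrow> bool" where
  "lin_on V W \<phi> \<longleftrightarrow> (\<forall>x\<in>vcarr V. \<phi> x \<in> vcarr W) \<and>
     (\<forall>x\<in>vcarr V. \<forall>y\<in>vcarr V. \<phi> (vadd V x y) = vadd W (\<phi> x) (\<phi> y)) \<and>
     (\<forall>c. \<forall>x\<in>vcarr V. \<phi> (vsmult V c x) = vsmult W c (\<phi> x))"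

lemma lin_onI:
  "(\<And>x. x \<in> vcarr V \<Longrightarrow> \<phi> x \<in> vcarr W) \<Longrightarrow>
   (\<And>x y. x \<in> vcarr V \<Longrightarrow> y \<in> vcarr V \<Longrightarrow> \<phi> (vadd V x y) = vadd W (\<phi> x) (\<phi> y)) \<Longrightarrow>
   (\<And>c x. x \<in> vcarr V \<Longrightarrow> \<phi> (vsmult V c x) = vsmult W c (\<phi> x)) \<Longrightarrow> lin_on V W \<phi>"
  by (simp add: lin_on_def)

lemma lin_in: "lin_on V W \<phi> \<Longrightarrow> x \<in> vcarr V \<Longrightarrow> \<phi> x \<in> vcarr W"
  by (simp add: lin_on_def)
lemma lin_add: "lin_on V W \<phi> \<Longrightarrow> x \<in> vcarr V \<Longrightarrow> y \<in> vcarr V \<Longrightarrow> \<phi> (vadd V x y) = vadd W (\<phi> x) (\<phi> y)"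
  by (simp add: lin_on_def)
lemma lin_sm: "lin_on V W \<phi> \<Longrightarrow> x \<in> vcarr V \<Longrightarrow> \<phi> (vsmult V c x) = vsmult W c (\<phi> x)"
  by (simp add: lin_on_def)

lemma lin_zero:
  assumes "vs V" "vs W" "lin_on V W \<phi>"
  shows "\<phi> (vzero V) = vzero W"
proof -
  have "\<phi> (vzero V) = \<phi> (vsmult V 0 (vzero V))" using vs.sm_zero_left[OF assms(1)] vs.zero_in[OF assms(1)] by simp
  also have "\<dots> = vsmult W 0 (\<phi> (vzero V))" using lin_sm[OF assms(3)] vs.zero_in[OF assms(1)] by simp
  also have "\<dots> = vzero W" using vs.sm_zero_left[OF assms(2)] lin_in[OF assms(3) vs.zero_in[OF assms(1)]] by simp
  finally show ?thesis .
qed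

lemma lin_lsum:
  assumes "vs V" "vs W" "lin_on V W \<phi>" "g ` S \<subseteq> vcarr V"
  shows "\<phi> (lsum V g S) = lsum W (\<lambda>x. \<phi> (g x)) S"
proof (cases "finite S")
  case True
  then show ?thesis using assms(4)
  proof (induction S rule: finite_induct)
    case empty
    then show ?case using lin_zero[OF assms(1-3)] by simp
  next
    case (insert x F)
    have gx: "g x \<in> vcarr V" "g ` F \<subseteq> vcarr V" using insert.prems by auto
    have "\<phi> (lsum V g (insert x F)) = \<phi> (vadd V (g x) (lsum V g F))"
      using vs.lsum_insert[OF assms(1) insert(1,2) insert.prems] by simp
    also have "\<dots> = vadd W (\<phi> (g x)) (\<phi> (lsum V g F))"
      using lin_add[OF assms(3)] gx vs.lsum_in[OF assms(1) gx(2)] by simp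
    also have "\<dots> = lsum W (\<lambda>x. \<phi> (g x)) (insert x F)"
      using insert gx lin_in[OF assms(3)]
      by (subst vs.lsum_insert[OF assms(2)]) (auto simp: image_subset_iff)
    finally show ?case .
  qed
next
  case False
  then show ?thesis using lin_zero[OF assms(1-3)] by (simp add: lsum_def)
qed

lemma lin_Lin:
  assumes "vs V" "vs W" "lin_on V W \<phi>" "\<And>p. g p \<in> vcarr V"
  shows "\<phi> (vs.Lin V g v) = vs.Lin W (\<lambda>p. \<phi> (g p)) v"
proof -
  have "\<phi> (vs.Lin V g v) = lsum W (\<lambda>p. \<phi> (vsmult V (Poly_Mapping.lookup v p) (g p))) (Poly_Mapping.keys v)"
    unfolding vs.Lin_def[OF assms(1)] using assms vs.sm_in[OF assms(1)]
    by (intro lin_lsum) auto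
  also have "\<dots> = vs.Lin W (\<lambda>p. \<phi> (g p)) v"
    unfolding vs.Lin_def[OF assms(2)] by (rule vs.lsum_cong[OF assms(2)]) (simp add: lin_sm[OF assms(3)] assms(4))
  finally show ?thesis .
qed

lemma lspan_sub: assumes "vs V" "G \<subseteq> vcarr V" shows "lspan V G \<subseteq> vcarr V"
proof
  fix x assume "x \<in> lspan V G"
  then show "x \<in> vcarr V"
    by (induction rule: lspan.induct) (use assms in \<open>auto simp: vs.zero_in vs.add_in vs.sm_in\<close>)
qed

lemma lspan_agree:
  assumes "vs V" "vs W" "lin_on V W \<phi>" "lin_on V W \<psi>" "G \<subseteq> vcarr V" "\<And>g. g \<in> G \<Longrightarrow> \<phi> g = \<psi> g"
    "x \<in> lspan V G"
  shows "\<phi> x = \<psi> x"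
  using assms(7)
proof (induction rule: lspan.induct)
  case lspan_zero
  then show ?case using lin_zero assms by metis
next
  case (lspan_gen g)
  then show ?case using assms by simp
next
  case (lspan_add x y)
  have "x \<in> vcarr V" "y \<in> vcarr V" using lspan_add lspan_sub[OF assms(1,5)] by auto
  then show ?case using lspan_add lin_add[OF assms(3)] lin_add[OF assms(4)] by simp
next
  case (lspan_smult x c)
  have "x \<in> vcarr V" using lspan_smult lspan_sub[OF assms(1,5)] by auto
  then show ?case using lspan_smult lin_sm[OF assms(3)] lin_sm[OF assms(4)] by simp
qed

section \<open>Hom-Leibniz algebras\<close>

locale hl = vs V for V :: "('k::field, 'a, 'm) hlalg_scheme" +
  assumes hlz: "hom_leibniz V"
begin

lemmas hlf = hlz[unfolded hom_leibniz_def]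

lemma br_in[simp]: "x \<in> vcarr V \<Longrightarrow> y \<in> vcarr V \<Longrightarrow> vbr V x y \<in> vcarr V"
  using hlf[THEN conjunct2, THEN conjunct1] by blast
lemma alpha_in[simp]: "x \<in> vcarr V \<Longrightarrow> valpha V x \<in> vcarr V"
  using hlf[THEN conjunct2, THEN conjunct2, THEN conjunct1] by blast
lemma br_add_left: "x \<in> vcarr V \<Longrightarrow> y \<in> vcarr V \<Longrightarrow> z \<in> vcarr V \<Longrightarrow>
   vbr V (vadd V x y) z = vadd V (vbr V x z) (vbr V y z)"
  using hlf[THEN conjunct2, THEN conjunct2, THEN conjunct2, THEN conjunct1] by blast
lemma br_add_right: "x \<in> vcarr V \<Longrightarrow> y \<in> vcarr V \<Longrightarrow> z \<in> vcarr V \<Longrightarrow>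
   vbr V x (vadd V y z) = vadd V (vbr V x y) (vbr V x z)"
  using hlf[THEN conjunct2, THEN conjunct2, THEN conjunct2, THEN conjunct2, THEN conjunct1] by blast
lemma br_sm_left: "x \<in> vcarr V \<Longrightarrow> y \<in> vcarr V \<Longrightarrow> vbr V (vsmult V c x) y = vsmult V c (vbr V x y)"
  using hlf[THEN conjunct2, THEN conjunct2, THEN conjunct2, THEN conjunct2, THEN conjunct2, THEN conjunct1] by blast
lemma br_sm_right: "x \<in> vcarr V \<Longrightarrow> y \<in> vcarr V \<Longrightarrow> vbr V x (vsmult V c y) = vsmult V c (vbr V x y)"
  using hlf[THEN conjunct2, THEN conjunct2, THEN conjunct2, THEN conjunct2, THEN conjunct2, THEN conjunct2, THEN conjunct1] by blast
lemma alpha_add: "x \<in> vcarr V \<Longrightarrow> y \<in> vcarr V \<Longrightarrow> valpha V (vadd V x y) = vadd V (valpha V x) (valpha V y)"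
  using hlf[THEN conjunct2, THEN conjunct2, THEN conjunct2, THEN conjunct2, THEN conjunct2, THEN conjunct2, THEN conjunct2, THEN conjunct1] by blast
lemma alpha_sm: "x \<in> vcarr V \<Longrightarrow> valpha V (vsmult V c x) = vsmult V c (valpha V x)"
  using hlf[THEN conjunct2, THEN conjunct2, THEN conjunct2, THEN conjunct2, THEN conjunct2, THEN conjunct2, THEN conjunct2, THEN conjunct2, THEN conjunct1] by blast
lemma leibniz: "x \<in> vcarr V \<Longrightarrow> y \<in> vcarr V \<Longrightarrow> z \<in> vcarr V \<Longrightarrow>
        vbr V (valpha V x) (vbr V y z) =
        vadd V (vbr V (vbr V x y) (valpha V z))
               (vsmult V (-1) (vbr V (vbr V x z) (valpha V y)))"
  using hlf[THEN conjunct2, THEN conjunct2, THEN conjunct2, THEN conjunct2, THEN conjunct2, THEN conjunct2, THEN conjunct2, THEN conjunct2, THEN conjunct2, THEN conjunct1] by blast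
lemma alpha_br: "x \<in> vcarr V \<Longrightarrow> y \<in> vcarr V \<Longrightarrow> valpha V (vbr V x y) = vbr V (valpha V x) (valpha V y)"
  using hlf[THEN conjunct2, THEN conjunct2, THEN conjunct2, THEN conjunct2, THEN conjunct2, THEN conjunct2, THEN conjunct2, THEN conjunct2, THEN conjunct2, THEN conjunct2] by blast

lemma br_zero_left[simp]: "y \<in> vcarr V \<Longrightarrow> vbr V (vzero V) y = vzero V"
  using br_sm_left[of "vzero V" y 0] by simp
lemma br_zero_right[simp]: "y \<in> vcarr V \<Longrightarrow> vbr V y (vzero V) = vzero V"
  using br_sm_right[of y "vzero V" 0] by simp
lemma alpha_zero[simp]: "valpha V (vzero V) = vzero V"
  using alpha_sm[of "vzero V" 0] by simp

lemma lin_alpha: "lin_on V V (valpha V)"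
  by (simp add: lin_on_def alpha_add alpha_sm)

lemma lin_br_left: "y \<in> vcarr V \<Longrightarrow> lin_on V V (\<lambda>x. vbr V x y)"
  by (simp add: lin_on_def br_add_left br_sm_left)
lemma lin_br_right: "x \<in> vcarr V \<Longrightarrow> lin_on V V (\<lambda>y. vbr V x y)"
  by (simp add: lin_on_def br_add_right br_sm_right)

end

section \<open>Derivations (generic facts)\<close>

lemma Der_in: "d \<in> Der L \<Longrightarrow> x \<in> vcarr L \<Longrightarrow> d x \<in> vcarr L"
  by (simp add: Der_def)
lemma Der_add: "d \<in> Der L \<Longrightarrow> x \<in> vcarr L \<Longrightarrow> y \<in> vcarr L \<Longrightarrow> d (vadd L x y) = vadd L (d x) (d y)"
  by (simp add: Der_def)
lemma Der_sm: "d \<in> Der L \<Longrightarrow> x \<in> vcarr L \<Longrightarrow> d (vsmult L c x) = vsmult L c (d x)"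
  by (simp add: Der_def)
lemma Der_br: "d \<in> Der L \<Longrightarrow> x \<in> vcarr L \<Longrightarrow> y \<in> vcarr L \<Longrightarrow>
   d (vbr L x y) = vadd L (vbr L (valpha L x) (d y)) (vbr L (d x) (valpha L y))"
  by (simp add: Der_def)
lemma Der_alpha: "d \<in> Der L \<Longrightarrow> x \<in> vcarr L \<Longrightarrow> d (valpha L x) = valpha L (d x)"
  by (simp add: Der_def)
lemma Der_ext: "d \<in> Der L \<Longrightarrow> d \<in> extensional (vcarr L)"
  by (simp add: Der_def)
lemma Der_lin: "d \<in> Der L \<Longrightarrow> lin_on L L d"
  by (simp add: Der_def lin_on_def)
lemma Der_eqI: "d1 \<in> Der L \<Longrightarrow> d2 \<in> Der L \<Longrightarrow> (\<And>x. x \<in> vcarr L \<Longrightarrow> d1 x = d2 x) \<Longrightarrow> d1 = d2"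
  by (metis Der_ext extensionalityI)

lemma DerI:
  assumes "d \<in> extensional (vcarr L)" "\<And>x. x \<in> vcarr L \<Longrightarrow> d x \<in> vcarr L"
    "\<And>x y. x \<in> vcarr L \<Longrightarrow> y \<in> vcarr L \<Longrightarrow> d (vadd L x y) = vadd L (d x) (d y)"
    "\<And>c x. x \<in> vcarr L \<Longrightarrow> d (vsmult L c x) = vsmult L c (d x)"
    "\<And>x y. x \<in> vcarr L \<Longrightarrow> y \<in> vcarr L \<Longrightarrow>
       d (vbr L x y) = vadd L (vbr L (valpha L x) (d y)) (vbr L (d x) (valpha L y))"
    "\<And>x. x \<in> vcarr L \<Longrightarrow> d (valpha L x) = valpha L (d x)"
  shows "d \<in> Der L"
  using assms by (simp add: Der_def)

context hl begin

lemma Der_zero: "d \<in> Der V \<Longrightarrow> d (vzero V) = vzero V"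
  using lin_zero[OF vs_axioms vs_axioms Der_lin] by blast

lemma Der_closed_add:
  assumes "d1 \<in> Der V" "d2 \<in> Der V"
  shows "der_add V d1 d2 \<in> Der V"
proof (rule DerI)
  show "der_add V d1 d2 \<in> extensional (vcarr V)" by (simp add: der_add_def)
next
  fix x assume x: "x \<in> vcarr V"
  then show "der_add V d1 d2 x \<in> vcarr V" using assms by (simp add: der_add_def Der_in)
  fix c show "der_add V d1 d2 (vsmult V c x) = vsmult V c (der_add V d1 d2 x)"
    using assms x by (simp add: der_add_def Der_in Der_sm sm_add)
next
  fix x assume x: "x \<in> vcarr V"
  show "der_add V d1 d2 (valpha V x) = valpha V (der_add V d1 d2 x)"
    using assms x by (simp add: der_add_def Der_in Der_alpha alpha_add)
next
  fix x y assume x: "x \<in> vcarr V" and y: "y \<in> vcarr V"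
  show "der_add V d1 d2 (vadd V x y) = vadd V (der_add V d1 d2 x) (der_add V d1 d2 y)"
    using assms x y by (simp add: der_add_def Der_in Der_add add_swap4)
  show "der_add V d1 d2 (vbr V x y) =
        vadd V (vbr V (valpha V x) (der_add V d1 d2 y)) (vbr V (der_add V d1 d2 x) (valpha V y))"
    using assms x y by (simp add: der_add_def Der_in Der_br br_add_left br_add_right add_swap4)
qed

lemma Der_closed_sm:
  assumes "d \<in> Der V"
  shows "der_smult V c d \<in> Der V"
proof (rule DerI)
  show "der_smult V c d \<in> extensional (vcarr V)" by (simp add: der_smult_def)
next
  fix x assume x: "x \<in> vcarr V"
  then show "der_smult V c d x \<in> vcarr V" using assms by (simp add: der_smult_def Der_in)
  fix e show "der_smult V c d (vsmult V e x) = vsmult V e (der_smult V c d x)"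
    using assms x by (simp add: der_smult_def Der_in Der_sm sm_sm[symmetric] mult.commute)
next
  fix x assume x: "x \<in> vcarr V"
  show "der_smult V c d (valpha V x) = valpha V (der_smult V c d x)"
    using assms x by (simp add: der_smult_def Der_in Der_alpha alpha_sm)
next
  fix x y assume x: "x \<in> vcarr V" and y: "y \<in> vcarr V"
  show "der_smult V c d (vadd V x y) = vadd V (der_smult V c d x) (der_smult V c d y)"
    using assms x y by (simp add: der_smult_def Der_in Der_add sm_add)
  show "der_smult V c d (vbr V x y) =
        vadd V (vbr V (valpha V x) (der_smult V c d y)) (vbr V (der_smult V c d x) (valpha V y))"
    using assms x y by (simp add: der_smult_def Der_in Der_br br_sm_left br_sm_right sm_add)
qed

end


lemma pspan_minus: "v \<in> pspan G \<Longrightarrow> - v \<in> pspan G"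
  by (metis pspan_smult psm_minus_one)
lemma pspan_diff: "v \<in> pspan G \<Longrightarrow> w \<in> pspan G \<Longrightarrow> v - w \<in> pspan G"
  by (metis diff_conv_add_uminus pspan_add pspan_minus)

lemma pmlin_pspan:
  assumes "\<And>g. g \<in> G \<Longrightarrow> pmlin h g \<in> pspan G2" "r \<in> pspan G"
  shows "pmlin h r \<in> pspan G2"
  using assms(2)
proof (induction rule: pspan.induct)
  case pspan_zero then show ?case by (simp add: pspan.pspan_zero)
next
  case (pspan_gen g) then show ?case using assms(1) by simp
next
  case (pspan_add v w) then show ?case by (simp add: pmlin_add pspan.pspan_add)
next
  case (pspan_smult v c) then show ?case by (simp add: pmlin_psm pspan.pspan_smult)
qed

lemma Lin_pspan:
  assumes "vs W" "\<And>p. g p \<in> vcarr W" "\<And>x. x \<in> G \<Longrightarrow> vs.Lin W g x = vzero W" "r \<in> pspan G"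
  shows "vs.Lin W g r = vzero W"
  using assms(4)
proof (induction rule: pspan.induct)
  case pspan_zero then show ?case by (simp add: vs.Lin_def[OF assms(1)])
next
  case (pspan_gen x) then show ?case using assms(3) by simp
next
  case (pspan_add v w) then show ?case using assms(1,2) by (simp add: vs.Lin_add vs.zero_add vs.zero_in)
next
  case (pspan_smult v c) then show ?case using assms(1,2) by (simp add: vs.Lin_psm vs.sm_zero_right)
qed

lemma R_zero[simp]: "0 \<in> uce_rel L" by (simp add: uce_rel_def pspan.pspan_zero)
lemma R_add: "v \<in> uce_rel L \<Longrightarrow> w \<in> uce_rel L \<Longrightarrow> v + w \<in> uce_rel L"
  by (simp add: uce_rel_def pspan.pspan_add)
lemma R_psm: "v \<in> uce_rel L \<Longrightarrow> psm c v \<in> uce_rel L"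
  by (simp add: uce_rel_def pspan.pspan_smult)
lemma R_minus: "v \<in> uce_rel L \<Longrightarrow> - v \<in> uce_rel L"
  by (simp add: uce_rel_def pspan_minus)
lemma R_diff: "v \<in> uce_rel L \<Longrightarrow> w \<in> uce_rel L \<Longrightarrow> v - w \<in> uce_rel L"
  by (simp add: uce_rel_def pspan_diff)
lemma R_gen: "g \<in> tensor_rels L \<or> g \<in> I_gens L \<Longrightarrow> g \<in> uce_rel L"
  by (auto simp: uce_rel_def pspan.pspan_gen)

lemma ucls_eqI:
  assumes "v - w \<in> uce_rel L"
  shows "ucls L v = ucls L w"
proof -
  have 1: "ucls L v \<subseteq> ucls L w" if "v - w \<in> uce_rel L" for v w
  proof
    fix x assume "x \<in> ucls L v"
    then obtain r where r: "r \<in> uce_rel L" "x = v + r" by (auto simp: ucls_def)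
    have "(v - w) + r \<in> uce_rel L" using that r by (simp add: R_add)
    then show "x \<in> ucls L w" unfolding ucls_def using r
      by (intro image_eqI[of _ _ "(v - w) + r"]) auto
  qed
  have "w - v \<in> uce_rel L" using R_minus[OF assms] by simp
  then show ?thesis using 1 assms by blast
qed

lemma self_in_ucls: "v \<in> ucls L v"
  unfolding ucls_def by (rule image_eqI[of _ _ 0]) auto

lemma ucls_eqD:
  assumes "ucls L v = ucls L w"
  shows "v - w \<in> uce_rel L"
proof -
  have "v \<in> ucls L w" using assms self_in_ucls by metis
  then obtain r where "r \<in> uce_rel L" "v = w + r" by (auto simp: ucls_def)
  then show ?thesis by simp
qed

lemma ucls_eq_iff: "ucls L v = ucls L w \<longleftrightarrow> v - w \<in> uce_rel L"
  using ucls_eqI ucls_eqD by blast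

lemma urep_mem: "urep (ucls L v) \<in> ucls L v"
  unfolding urep_def by (rule someI[of _ v]) (rule self_in_ucls)

lemma urep_diff: "urep (ucls L v) - v \<in> uce_rel L"
  using urep_mem[of L v] by (auto simp: ucls_def)

lemma ucls_urep[simp]: "ucls L (urep (ucls L v)) = ucls L v"
  by (rule ucls_eqI) (rule urep_diff)

lemma uce_add: "vadd (uce L) (ucls L v) (ucls L w) = ucls L (v + w)"
proof -
  have "(urep (ucls L v) + urep (ucls L w)) - (v + w) =
        (urep (ucls L v) - v) + (urep (ucls L w) - w)" by simp
  then show ?thesis unfolding uce_def
    by (simp, intro ucls_eqI) (metis R_add urep_diff)
qed

lemma uce_sm: "vsmult (uce L) c (ucls L v) = ucls L (psm c v)"
proof -
  have "psm c (urep (ucls L v)) - psm c v = psm c (urep (ucls L v) - v)" by (simp add: psm_diff)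
  then show ?thesis unfolding uce_def
    by (simp, intro ucls_eqI) (metis R_psm urep_diff)
qed

lemma uce_zero: "vzero (uce L) = ucls L 0" by (simp add: uce_def)

lemma pmlin_ucls:
  assumes "\<And>r. r \<in> uce_rel L \<Longrightarrow> pmlin h r \<in> uce_rel L2"
  shows "ucls L2 (pmlin h (urep (ucls L v))) = ucls L2 (pmlin h v)"
  by (rule ucls_eqI) (metis assms pmlin_diff urep_diff)

lemma keys_gen: "Poly_Mapping.keys (gen a b :: _ \<Rightarrow>\<^sub>0 'k::field) = {(a, b)}"
  by (simp add: gen_def)

lemma free_on_add: "v \<in> free_on A \<Longrightarrow> w \<in> free_on A \<Longrightarrow> v + w \<in> free_on A"
  using keys_add[of v w] by (auto simp: free_on_def)
lemma free_on_psm: "v \<in> free_on A \<Longrightarrow> psm c v \<in> free_on A"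
  using keys_psm[of c v] by (auto simp: free_on_def)
lemma free_on_minus: "v \<in> free_on A \<Longrightarrow> - v \<in> free_on A"
  by (simp add: free_on_def)
lemma free_on_diff: "v \<in> free_on A \<Longrightarrow> w \<in> free_on A \<Longrightarrow> v - w \<in> free_on A"
  by (metis diff_conv_add_uminus free_on_add free_on_minus)
lemma free_on_zero[simp]: "0 \<in> free_on A" by (simp add: free_on_def)
lemma free_on_gen: "a \<in> A \<Longrightarrow> b \<in> A \<Longrightarrow> gen a b \<in> free_on A"
  by (simp add: free_on_def keys_gen)
lemma free_on_single: "p \<in> A \<times> A \<Longrightarrow> Poly_Mapping.single p c \<in> free_on A"
  by (simp add: free_on_def)

lemma keys_pmlin: "Poly_Mapping.keys (pmlin h v) \<subseteq> (\<Union>p\<in>Poly_Mapping.keys v. Poly_Mapping.keys (h p))"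
  unfolding pmlin_def using keys_sum keys_psm by fastforce

lemma free_on_pmlin:
  assumes "\<And>p. p \<in> Poly_Mapping.keys v \<Longrightarrow> h p \<in> free_on A"
  shows "pmlin h v \<in> free_on A"
  using keys_pmlin[of h v] assms by (fastforce simp: free_on_def)


context vs begin
lemma cancel_sum: "y \<in> vcarr V \<Longrightarrow> z \<in> vcarr V \<Longrightarrow>
  vadd V (vadd V (vadd V y z) (vsmult V (-1) y)) (vsmult V (-1) z) = vzero V"
  by (metis add_assoc add_comm add_in add_neg add_zero sm_in)
lemma cancel_leib: "p \<in> vcarr V \<Longrightarrow> q \<in> vcarr V \<Longrightarrow>
  vadd V (vadd V (vsmult V (-1) p) q) (vadd V p (vsmult V (-1) q)) = vzero V"
  by (metis add_swap4 add_neg neg_add add_zero sm_in zero_in)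
lemma cancel_leib2: assumes "p \<in> vcarr V" "q \<in> vcarr V" shows
  "vadd V (vadd V q (vsmult V (-1) p)) (vadd V p (vsmult V (-1) q)) = vzero V"
  using cancel_leib[OF assms] add_comm[of q "vsmult V (-1) p"] assms by simp
lemma Lin_minus: "(\<And>p. g p \<in> vcarr V) \<Longrightarrow> Lin g (- v) = vsmult V (-1) (Lin g v)"
  by (metis Lin_psm psm_minus_one)
lemma Lin_diff: "(\<And>p. g p \<in> vcarr V) \<Longrightarrow> Lin g (v - w) = vadd V (Lin g v) (vsmult V (-1) (Lin g w))"
  by (metis Lin_add Lin_minus diff_conv_add_uminus)
lemma Lin_gen: "(\<And>p. g p \<in> vcarr V) \<Longrightarrow> Lin g (gen a b) = g (a, b)"
  by (simp add: gen_def Lin_single)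
end

locale pf = hl V for V :: "('k::field, 'a, 'm) hlalg_scheme" +
  assumes perf: "alpha_perfect V"
begin

definition Gbr where "Gbr = {vbr V (valpha V x) (valpha V y) | x y. x \<in> vcarr V \<and> y \<in> vcarr V}"

lemma carr_lspan: "vcarr V = lspan V Gbr"
  using perf by (simp add: alpha_perfect_def Gbr_def)

lemma Gbr_sub: "Gbr \<subseteq> vcarr V" by (auto simp: Gbr_def)

lemma alpha_surj: "valpha V ` vcarr V = vcarr V"
proof
  show "valpha V ` vcarr V \<subseteq> vcarr V" by auto
  have "x \<in> valpha V ` vcarr V" if "x \<in> lspan V Gbr" for x
    using that
  proof (induction rule: lspan.induct)
    case lspan_zero
    then show ?case by (metis alpha_zero image_eqI zero_in)
  next
    case (lspan_gen g)
    then obtain x y where "x \<in> vcarr V" "y \<in> vcarr V" "g = vbr V (valpha V x) (valpha V y)"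
      by (auto simp: Gbr_def)
    then show ?case by (metis alpha_br br_in image_eqI)
  next
    case (lspan_add x y)
    then obtain a b where "a \<in> vcarr V" "b \<in> vcarr V" "x = valpha V a" "y = valpha V b" by auto
    then show ?case by (metis alpha_add add_in image_eqI)
  next
    case (lspan_smult x c)
    then obtain a where "a \<in> vcarr V" "x = valpha V a" by auto
    then show ?case by (metis alpha_sm sm_in image_eqI)
  qed
  then show "vcarr V \<subseteq> valpha V ` vcarr V" using carr_lspan by auto
qed

lemma alpha_ex: "x \<in> vcarr V \<Longrightarrow> \<exists>y\<in>vcarr V. x = valpha V y"
  using alpha_surj by auto

lemma uce_carr: "vcarr (uce V) = ucls V ` free_on (vcarr V)"
  by (simp add: uce_def alpha_surj)

lemma tensor_rels_cases:
  assumes "g \<in> tensor_rels V"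
  obtains (al) a a' b where "a \<in> vcarr V" "a' \<in> vcarr V" "b \<in> vcarr V" "g = gen (vadd V a a') b - gen a b - gen a' b"
    | (ar) a b b' where "a \<in> vcarr V" "b \<in> vcarr V" "b' \<in> vcarr V" "g = gen a (vadd V b b') - gen a b - gen a b'"
    | (sl) c a b where "a \<in> vcarr V" "b \<in> vcarr V" "g = gen (vsmult V c a) b - psm c (gen a b)"
    | (sr) c a b where "a \<in> vcarr V" "b \<in> vcarr V" "g = gen a (vsmult V c b) - psm c (gen a b)"
  using assms unfolding tensor_rels_def Let_def alpha_surj by blast

lemma I_gens_cases:
  assumes "g \<in> I_gens V"
  obtains x1 x2 x3 where "x1 \<in> vcarr V" "x2 \<in> vcarr V" "x3 \<in> vcarr V"
    "g = - gen (vbr V x1 x2) (valpha V x3) + gen (vbr V x1 x3) (valpha V x2) + gen (valpha V x1) (vbr V x2 x3)"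
  using assms unfolding I_gens_def by blast

lemma tr_al: "a \<in> vcarr V \<Longrightarrow> a' \<in> vcarr V \<Longrightarrow> b \<in> vcarr V \<Longrightarrow> gen (vadd V a a') b - gen a b - gen a' b \<in> uce_rel V"
  by (rule R_gen, rule disjI1) (unfold tensor_rels_def Let_def alpha_surj, blast)
lemma tr_ar: "a \<in> vcarr V \<Longrightarrow> b \<in> vcarr V \<Longrightarrow> b' \<in> vcarr V \<Longrightarrow> gen a (vadd V b b') - gen a b - gen a b' \<in> uce_rel V"
  by (rule R_gen, rule disjI1) (unfold tensor_rels_def Let_def alpha_surj, blast)
lemma tr_sl: "a \<in> vcarr V \<Longrightarrow> b \<in> vcarr V \<Longrightarrow> gen (vsmult V c a) b - psm c (gen a b) \<in> uce_rel V"
  by (rule R_gen, rule disjI1) (unfold tensor_rels_def Let_def alpha_surj, blast)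
lemma tr_sr: "a \<in> vcarr V \<Longrightarrow> b \<in> vcarr V \<Longrightarrow> gen a (vsmult V c b) - psm c (gen a b) \<in> uce_rel V"
  by (rule R_gen, rule disjI1) (unfold tensor_rels_def Let_def alpha_surj, blast)
lemma tr_I: "x1 \<in> vcarr V \<Longrightarrow> x2 \<in> vcarr V \<Longrightarrow> x3 \<in> vcarr V \<Longrightarrow>
   - gen (vbr V x1 x2) (valpha V x3) + gen (vbr V x1 x3) (valpha V x2) + gen (valpha V x1) (vbr V x2 x3) \<in> uce_rel V"
  by (rule R_gen) (auto simp: I_gens_def)

lemma R_free: "r \<in> uce_rel V \<Longrightarrow> r \<in> free_on (vcarr V)"
  unfolding uce_rel_def
proof (induction rule: pspan.induct)
  case (pspan_gen g)
  then show ?case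
  proof
    assume "g \<in> tensor_rels V"
    then show ?thesis
      by (cases rule: tensor_rels_cases) (auto intro!: free_on_diff free_on_gen free_on_psm)
  next
    assume "g \<in> I_gens V"
    then show ?thesis
      by (cases rule: I_gens_cases) (auto intro!: free_on_add free_on_minus free_on_gen free_on_diff)
  qed
qed (auto intro: free_on_add free_on_psm)

subsection \<open>The map U on representatives\<close>

definition gU where "gU p = (if p \<in> vcarr V \<times> vcarr V then vbr V (fst p) (snd p) else vzero V)"
definition Usum where "Usum v = Lin gU v"

lemma gU_in[simp]: "gU p \<in> vcarr V" by (auto simp: gU_def)
lemma Usum_in[simp]: "Usum v \<in> vcarr V" by (simp add: Usum_def)
lemma Usum_add: "Usum (v + w) = vadd V (Usum v) (Usum w)" by (simp add: Usum_def Lin_add)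
lemma Usum_psm: "Usum (psm c v) = vsmult V c (Usum v)" by (simp add: Usum_def Lin_psm)
lemma Usum_zero[simp]: "Usum 0 = vzero V" by (simp add: Usum_def)
lemma Usum_minus: "Usum (- v) = vsmult V (-1) (Usum v)" by (simp add: Usum_def Lin_minus)
lemma Usum_diff: "Usum (v - w) = vadd V (Usum v) (vsmult V (-1) (Usum w))" by (simp add: Usum_def Lin_diff)
lemma Usum_gen: "a \<in> vcarr V \<Longrightarrow> b \<in> vcarr V \<Longrightarrow> Usum (gen a b) = vbr V a b"
  by (simp add: Usum_def Lin_gen[OF gU_in] gU_def)
lemma Usum_single: "p \<in> vcarr V \<times> vcarr V \<Longrightarrow> Usum (Poly_Mapping.single p c) = vsmult V c (vbr V (fst p) (snd p))"
  by (simp add: Usum_def Lin_single[OF gU_in] gU_def)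

lemma lin_Usum: "lin_on PM V Usum"
  by (simp add: lin_on_def Usum_add Usum_psm)

lemma Usum_R: "r \<in> uce_rel V \<Longrightarrow> Usum r = vzero V"
  unfolding Usum_def uce_rel_def
proof (rule Lin_pspan[OF vs_axioms gU_in])
  fix g assume "g \<in> tensor_rels V \<union> I_gens V"
  then show "Lin gU g = vzero V"
  proof
    assume "g \<in> tensor_rels V"
    then show ?thesis
    proof (cases rule: tensor_rels_cases)
      case (al a a' b)
      then show ?thesis using Usum_diff[unfolded Usum_def] Usum_gen[unfolded Usum_def]
        by (simp add: br_add_left cancel_sum)
    next
      case (ar a b b')
      then show ?thesis using Usum_diff[unfolded Usum_def] Usum_gen[unfolded Usum_def]
        by (simp add: br_add_right cancel_sum)
    next
      case (sl c a b)
      then show ?thesis using Usum_diff[unfolded Usum_def] Usum_gen[unfolded Usum_def] Usum_psm[unfolded Usum_def]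
        by (simp add: br_sm_left)
    next
      case (sr c a b)
      then show ?thesis using Usum_diff[unfolded Usum_def] Usum_gen[unfolded Usum_def] Usum_psm[unfolded Usum_def]
        by (simp add: br_sm_right)
    qed
  next
    assume "g \<in> I_gens V"
    then show ?thesis
    proof (cases rule: I_gens_cases)
      case (1 x1 x2 x3)
      then show ?thesis using Usum_add[unfolded Usum_def] Usum_diff[unfolded Usum_def] Usum_gen[unfolded Usum_def]
        by (simp add: leibniz cancel_leib2)
    qed
  qed
qed

lemma uceU_ucls:
  assumes "v \<in> free_on (vcarr V)"
  shows "uceU V (ucls V v) = Usum v"
proof -
  let ?u = "urep (ucls V v)"
  have d: "?u - v \<in> uce_rel V" by (rule urep_diff)
  then have "?u \<in> free_on (vcarr V)"
    using R_free assms free_on_add by (metis diff_add_cancel)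
  then have "uceU V (ucls V v) = Usum ?u"
    unfolding uceU_def Let_def Usum_def Lin_def
    by (intro lsum_cong) (auto simp: gU_def free_on_def)
  also have "\<dots> = Usum (v + (?u - v))" by simp
  also have "\<dots> = vadd V (Usum v) (Usum (?u - v))" by (rule Usum_add)
  also have "\<dots> = Usum v" using Usum_R[OF d] by simp
  finally show ?thesis .
qed

lemma Usum_surj:
  assumes "x \<in> vcarr V"
  shows "\<exists>v\<in>free_on (vcarr V). Usum v = x"
proof -
  have "x \<in> lspan V Gbr" using assms carr_lspan by simp
  then show ?thesis
  proof (induction rule: lspan.induct)
    case lspan_zero
    then show ?case by (intro bexI[of _ 0]) auto
  next
    case (lspan_gen g)
    then obtain x y where "x \<in> vcarr V" "y \<in> vcarr V" "g = vbr V (valpha V x) (valpha V y)"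
      by (auto simp: Gbr_def)
    then show ?case by (intro bexI[of _ "gen (valpha V x) (valpha V y)"]) (auto simp: Usum_gen free_on_gen)
  next
    case (lspan_add x y)
    then obtain v w where "v \<in> free_on (vcarr V)" "w \<in> free_on (vcarr V)" "Usum v = x" "Usum w = y" by auto
    then show ?case by (intro bexI[of _ "v + w"]) (auto simp: Usum_add free_on_add)
  next
    case (lspan_smult x c)
    then obtain v where "v \<in> free_on (vcarr V)" "Usum v = x" by auto
    then show ?case by (intro bexI[of _ "psm c v"]) (auto simp: Usum_psm free_on_psm)
  qed
qed

end


lemma pmlin_in_pspan:
  assumes "\<And>p. p \<in> Poly_Mapping.keys v \<Longrightarrow> h p \<in> pspan G"
  shows "pmlin h v \<in> pspan G"
proof -
  have "finite S \<Longrightarrow> S \<subseteq> Poly_Mapping.keys v \<Longrightarrow> (\<Sum>p\<in>S. psm (Poly_Mapping.lookup v p) (h p)) \<in> pspan G" for S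
    by (induction S rule: finite_induct) (auto intro!: pspan.pspan_add pspan.pspan_smult pspan.pspan_zero assms)
  then show ?thesis by (simp add: pmlin_def)
qed

lemma pmlin_in_R: "(\<And>p. p \<in> Poly_Mapping.keys v \<Longrightarrow> h p \<in> uce_rel L) \<Longrightarrow> pmlin h v \<in> uce_rel L"
  unfolding uce_rel_def by (rule pmlin_in_pspan)

context pf begin

lemma urep_F: "v \<in> free_on (vcarr V) \<Longrightarrow> urep (ucls V v) \<in> free_on (vcarr V)"
  using urep_diff[of V v] R_free free_on_add by (metis diff_add_cancel)

lemma Usum_urep: "Usum (urep (ucls V v)) = Usum v"
proof -
  have "Usum (urep (ucls V v)) = Usum (v + (urep (ucls V v) - v))" by simp
  also have "\<dots> = vadd V (Usum v) (Usum (urep (ucls V v) - v))" by (rule Usum_add)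
  also have "\<dots> = Usum v" using Usum_R[OF urep_diff] by simp
  finally show ?thesis .
qed

lemma free_keys: "v \<in> free_on (vcarr V) \<Longrightarrow> p \<in> Poly_Mapping.keys v \<Longrightarrow> fst p \<in> vcarr V \<and> snd p \<in> vcarr V"
  by (auto simp: free_on_def)

definition hD where
  "hD d p = gen (d (fst p)) (valpha V (snd p)) + gen (valpha V (fst p)) (d (snd p))"
definition DD where "DD d v = pmlin (hD d) v"

lemma DD_R:
  assumes d: "d \<in> Der V" and r: "r \<in> uce_rel V"
  shows "DD d r \<in> uce_rel V"
  unfolding DD_def using r unfolding uce_rel_def
proof (rule pmlin_pspan[rotated])
  fix g assume "g \<in> tensor_rels V \<union> I_gens V"
  then have "pmlin (hD d) g \<in> uce_rel V"
  proof
    assume "g \<in> tensor_rels V"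
    then show ?thesis
    proof (cases rule: tensor_rels_cases)
      case (al a a' b)
      let ?T1 = "gen (vadd V (d a) (d a')) (valpha V b) - gen (d a) (valpha V b) - gen (d a') (valpha V b)"
      let ?T2 = "gen (vadd V (valpha V a) (valpha V a')) (d b) - gen (valpha V a) (d b) - gen (valpha V a') (d b)"
      have "pmlin (hD d) g = ?T1 + ?T2"
        unfolding al(4) using al(1-3) d by (simp add: pmlin_diff pmlin_add pmlin_minus hD_def Der_add alpha_add algebra_simps)
      moreover have "?T1 \<in> uce_rel V" "?T2 \<in> uce_rel V"
        using al d by (auto intro!: tr_al simp: Der_in)
      ultimately show ?thesis by (simp add: R_add)
    next
      case (ar a b b')
      let ?T1 = "gen (d a) (vadd V (valpha V b) (valpha V b')) - gen (d a) (valpha V b) - gen (d a) (valpha V b')"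
      let ?T2 = "gen (valpha V a) (vadd V (d b) (d b')) - gen (valpha V a) (d b) - gen (valpha V a) (d b')"
      have "pmlin (hD d) g = ?T1 + ?T2"
        unfolding ar(4) using ar(1-3) d by (simp add: pmlin_diff pmlin_add pmlin_minus hD_def Der_add alpha_add algebra_simps)
      moreover have "?T1 \<in> uce_rel V" "?T2 \<in> uce_rel V"
        using ar d by (auto intro!: tr_ar simp: Der_in)
      ultimately show ?thesis by (simp add: R_add)
    next
      case (sl c a b)
      let ?T1 = "gen (vsmult V c (d a)) (valpha V b) - psm c (gen (d a) (valpha V b))"
      let ?T2 = "gen (vsmult V c (valpha V a)) (d b) - psm c (gen (valpha V a) (d b))"
      have "pmlin (hD d) g = ?T1 + ?T2"
        unfolding sl(3) using sl(1-2) d by (simp add: pmlin_diff pmlin_add pmlin_minus pmlin_psm hD_def Der_sm alpha_sm psm_add_right algebra_simps)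
      moreover have "?T1 \<in> uce_rel V" "?T2 \<in> uce_rel V"
        using sl d by (auto intro!: tr_sl simp: Der_in)
      ultimately show ?thesis by (simp add: R_add)
    next
      case (sr c a b)
      let ?T1 = "gen (d a) (vsmult V c (valpha V b)) - psm c (gen (d a) (valpha V b))"
      let ?T2 = "gen (valpha V a) (vsmult V c (d b)) - psm c (gen (valpha V a) (d b))"
      have "pmlin (hD d) g = ?T1 + ?T2"
        unfolding sr(3) using sr(1-2) d by (simp add: pmlin_diff pmlin_add pmlin_minus pmlin_psm hD_def Der_sm alpha_sm psm_add_right algebra_simps)
      moreover have "?T1 \<in> uce_rel V" "?T2 \<in> uce_rel V"
        using sr d by (auto intro!: tr_sr simp: Der_in)
      ultimately show ?thesis by (simp add: R_add)
    qed
  next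
    assume "g \<in> I_gens V"
    then show ?thesis
    proof (cases rule: I_gens_cases)
      case (1 x1 x2 x3)
      note x = 1(1-3)
      have dx: "d x1 \<in> vcarr V" "d x2 \<in> vcarr V" "d x3 \<in> vcarr V" using x d by (auto simp: Der_in)
      let ?b = "vbr V" and ?a = "valpha V"
      let ?I1 = "- gen (?b (d x1) (?a x2)) (?a (?a x3)) + gen (?b (d x1) (?a x3)) (?a (?a x2)) + gen (?a (d x1)) (?b (?a x2) (?a x3))"
      let ?I2 = "- gen (?b (?a x1) (d x2)) (?a (?a x3)) + gen (?b (?a x1) (?a x3)) (?a (d x2)) + gen (?a (?a x1)) (?b (d x2) (?a x3))"
      let ?I3 = "- gen (?b (?a x1) (?a x2)) (?a (d x3)) + gen (?b (?a x1) (d x3)) (?a (?a x2)) + gen (?a (?a x1)) (?b (?a x2) (d x3))"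
      let ?T1 = "gen (vadd V (?b (?a x1) (d x2)) (?b (d x1) (?a x2))) (?a (?a x3)) - gen (?b (?a x1) (d x2)) (?a (?a x3)) - gen (?b (d x1) (?a x2)) (?a (?a x3))"
      let ?T2 = "gen (vadd V (?b (?a x1) (d x3)) (?b (d x1) (?a x3))) (?a (?a x2)) - gen (?b (?a x1) (d x3)) (?a (?a x2)) - gen (?b (d x1) (?a x3)) (?a (?a x2))"
      let ?T3 = "gen (?a (?a x1)) (vadd V (?b (?a x2) (d x3)) (?b (d x2) (?a x3))) - gen (?a (?a x1)) (?b (?a x2) (d x3)) - gen (?a (?a x1)) (?b (d x2) (?a x3))"
      have eq: "pmlin (hD d) g = (?I1 + ?I2 + ?I3) + (- ?T1 + ?T2 + ?T3)"
        unfolding 1(4) using x d by (simp add: pmlin_add pmlin_minus pmlin_diff hD_def Der_br alpha_br Der_alpha algebra_simps)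
      have i1: "?I1 \<in> uce_rel V" by (rule tr_I) (use x dx in auto)
      have i2: "?I2 \<in> uce_rel V" by (rule tr_I) (use x dx in auto)
      have i3: "?I3 \<in> uce_rel V" by (rule tr_I) (use x dx in auto)
      have t: "?T1 \<in> uce_rel V" "?T2 \<in> uce_rel V" "?T3 \<in> uce_rel V"
        using x dx by (auto intro!: tr_al tr_ar)
      have "(?I1 + ?I2 + ?I3) + (- ?T1 + ?T2 + ?T3) \<in> uce_rel V"
        by (intro R_add R_minus i1 i2 i3 t)
      then show ?thesis by (simp only: eq)
    qed
  qed
  then show "pmlin (hD d) g \<in> pspan (tensor_rels V \<union> I_gens V)" by (simp add: uce_rel_def)
qed

end


context pf begin

definition hA where "hA p = gen (valpha V (fst p)) (valpha V (snd p))"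
definition AA where "AA v = pmlin hA v"

lemma AA_R:
  assumes r: "r \<in> uce_rel V"
  shows "AA r \<in> uce_rel V"
  unfolding AA_def using r unfolding uce_rel_def
proof (rule pmlin_pspan[rotated])
  fix g assume "g \<in> tensor_rels V \<union> I_gens V"
  then have "pmlin hA g \<in> uce_rel V"
  proof
    assume "g \<in> tensor_rels V"
    then show ?thesis
    proof (cases rule: tensor_rels_cases)
      case (al a a' b)
      then show ?thesis unfolding al(4) using al(1-3)
        by (simp add: pmlin_diff hA_def alpha_add tr_al)
    next
      case (ar a b b')
      then show ?thesis unfolding ar(4) using ar(1-3)
        by (simp add: pmlin_diff hA_def alpha_add tr_ar)
    next
      case (sl c a b)
      then show ?thesis unfolding sl(3) using sl(1-2)
        by (simp add: pmlin_diff pmlin_psm hA_def alpha_sm tr_sl)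
    next
      case (sr c a b)
      then show ?thesis unfolding sr(3) using sr(1-2)
        by (simp add: pmlin_diff pmlin_psm hA_def alpha_sm tr_sr)
    qed
  next
    assume "g \<in> I_gens V"
    then show ?thesis
    proof (cases rule: I_gens_cases)
      case (1 x1 x2 x3)
      have "pmlin hA g = - gen (vbr V (valpha V x1) (valpha V x2)) (valpha V (valpha V x3))
          + gen (vbr V (valpha V x1) (valpha V x3)) (valpha V (valpha V x2))
          + gen (valpha V (valpha V x1)) (vbr V (valpha V x2) (valpha V x3))"
        unfolding 1(4) using 1(1-3) by (simp add: pmlin_add pmlin_minus pmlin_diff hA_def alpha_br)
      also have "\<dots> \<in> uce_rel V" by (rule tr_I) (use 1 in auto)
      finally show ?thesis .
    qed
  qed
  then show "pmlin hA g \<in> pspan (tensor_rels V \<union> I_gens V)" by (simp add: uce_rel_def)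
qed

lemma DD_F:
  assumes "d \<in> Der V" "v \<in> free_on (vcarr V)"
  shows "DD d v \<in> free_on (vcarr V)"
  unfolding DD_def
proof (rule free_on_pmlin)
  fix p assume "p \<in> Poly_Mapping.keys v"
  then have p: "fst p \<in> vcarr V" "snd p \<in> vcarr V" using free_keys[OF assms(2)] by auto
  show "hD d p \<in> free_on (vcarr V)" unfolding hD_def
    by (intro free_on_add free_on_gen) (use p assms(1) in \<open>auto simp: Der_in\<close>)
qed

lemma AA_F:
  assumes "v \<in> free_on (vcarr V)"
  shows "AA v \<in> free_on (vcarr V)"
  unfolding AA_def
proof (rule free_on_pmlin)
  fix p assume "p \<in> Poly_Mapping.keys v"
  then have p: "fst p \<in> vcarr V" "snd p \<in> vcarr V" using free_keys[OF assms] by auto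
  show "hA p \<in> free_on (vcarr V)" unfolding hA_def
    by (intro free_on_gen) (use p in auto)
qed

lemma ucls_in_uce: "v \<in> free_on (vcarr V) \<Longrightarrow> ucls V v \<in> vcarr (uce V)"
  by (simp add: uce_carr)

lemma uce_der_ucls:
  assumes "d \<in> Der V" "v \<in> free_on (vcarr V)"
  shows "uce_der V d (ucls V v) = ucls V (DD d v)"
proof -
  have "uce_der V d (ucls V v) = ucls V (pmlin (hD d) (urep (ucls V v)))"
    using ucls_in_uce[OF assms(2)] by (simp add: uce_der_def hD_def[abs_def])
  also have "\<dots> = ucls V (pmlin (hD d) v)"
    by (rule pmlin_ucls) (use DD_R[OF assms(1)] in \<open>simp add: DD_def\<close>)
  finally show ?thesis by (simp add: DD_def)
qed

lemma uce_alpha_ucls: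
  shows "valpha (uce V) (ucls V v) = ucls V (AA v)"
proof -
  have "valpha (uce V) (ucls V v) = ucls V (pmlin hA (urep (ucls V v)))"
    by (simp add: uce_def hA_def[abs_def])
  also have "\<dots> = ucls V (pmlin hA v)"
    by (rule pmlin_ucls) (use AA_R in \<open>simp add: AA_def\<close>)
  finally show ?thesis by (simp add: AA_def)
qed

lemma Usum_pmlin: "Usum (pmlin h v) = Lin (\<lambda>p. Usum (h p)) v"
  unfolding Usum_def by (rule Lin_pmlin[OF vs_axioms gU_in])

lemma Usum_DD:
  assumes d: "d \<in> Der V" and v: "v \<in> free_on (vcarr V)"
  shows "Usum (DD d v) = d (Usum v)"
proof -
  have "Usum (DD d v) = Lin (\<lambda>p. Usum (hD d p)) v" by (simp add: DD_def Usum_pmlin)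
  also have "\<dots> = Lin (\<lambda>p. d (gU p)) v"
  proof (rule Lin_cong)
    fix p assume "p \<in> Poly_Mapping.keys v"
    then have p: "fst p \<in> vcarr V" "snd p \<in> vcarr V" using free_keys[OF v] by auto
    then show "Usum (hD d p) = d (gU p)"
      using d by (simp add: hD_def Usum_add Usum_gen Der_in Der_br gU_def add_comm mem_Times_iff)
  qed
  also have "\<dots> = d (Lin gU v)"
    by (rule lin_Lin[symmetric, OF vs_axioms vs_axioms Der_lin[OF d] gU_in])
  finally show ?thesis by (simp add: Usum_def)
qed

lemma Usum_AA:
  assumes v: "v \<in> free_on (vcarr V)"
  shows "Usum (AA v) = valpha V (Usum v)"
proof -
  have "Usum (AA v) = Lin (\<lambda>p. Usum (hA p)) v" by (simp add: AA_def Usum_pmlin)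
  also have "\<dots> = Lin (\<lambda>p. valpha V (gU p)) v"
  proof (rule Lin_cong)
    fix p assume "p \<in> Poly_Mapping.keys v"
    then have p: "fst p \<in> vcarr V" "snd p \<in> vcarr V" using free_keys[OF v] by auto
    then show "Usum (hA p) = valpha V (gU p)"
      by (simp add: hA_def Usum_gen gU_def alpha_br mem_Times_iff)
  qed
  also have "\<dots> = valpha V (Lin gU v)"
    by (rule lin_Lin[symmetric, OF vs_axioms vs_axioms lin_alpha gU_in])
  finally show ?thesis by (simp add: Usum_def)
qed

lemma gen_zero_right: "a \<in> vcarr V \<Longrightarrow> gen a (vzero V) \<in> uce_rel V"
  using tr_sr[of a "vzero V" 0] by simp
lemma gen_zero_left: "b \<in> vcarr V \<Longrightarrow> gen (vzero V) b \<in> uce_rel V"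
  using tr_sl[of "vzero V" b 0] by simp

lemma br_inner:
  assumes a: "a \<in> vcarr V" and w: "w \<in> free_on (vcarr V)"
  shows "pmlin (\<lambda>q. gen a (vbr V (fst q) (snd q))) w - gen a (Usum w) \<in> uce_rel V"
  using w[unfolded free_on_def, simplified]
proof (induction w rule: pm_induct)
  case zero
  then show ?case using gen_zero_right[OF a] R_minus by fastforce
next
  case (step p c w)
  let ?x = "vbr V (fst p) (snd p)"
  have p: "fst p \<in> vcarr V" "snd p \<in> vcarr V" using step by auto
  have wf: "w \<in> free_on (vcarr V)" using step by (simp add: free_on_def)
  have U: "Usum (Poly_Mapping.single p c + w) = vadd V (vsmult V c ?x) (Usum w)"
    using p by (simp add: Usum_add Usum_single mem_Times_iff)
  have "pmlin (\<lambda>q. gen a (vbr V (fst q) (snd q))) (Poly_Mapping.single p c + w) - gen a (Usum (Poly_Mapping.single p c + w))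
      = (pmlin (\<lambda>q. gen a (vbr V (fst q) (snd q))) w - gen a (Usum w))
        - (gen a (vadd V (vsmult V c ?x) (Usum w)) - gen a (vsmult V c ?x) - gen a (Usum w))
        - (gen a (vsmult V c ?x) - psm c (gen a ?x))"
    by (simp add: U pmlin_add pmlin_single)
  also have "\<dots> \<in> uce_rel V"
  proof -
    have h2: "gen a (vadd V (vsmult V c ?x) (Usum w)) - gen a (vsmult V c ?x) - gen a (Usum w) \<in> uce_rel V"
      using p a by (intro tr_ar) auto
    have h3: "gen a (vsmult V c ?x) - psm c (gen a ?x) \<in> uce_rel V" using p a by (intro tr_sr) auto
    show ?thesis by (rule R_diff[OF R_diff[OF step(3) h2] h3])
  qed
  finally show ?case .
qed

lemma br_outer:
  assumes v: "v \<in> free_on (vcarr V)" and w: "w \<in> free_on (vcarr V)"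
  shows "pmlin (\<lambda>p. pmlin (\<lambda>q. gen (vbr V (fst p) (snd p)) (vbr V (fst q) (snd q))) w) v
           - gen (Usum v) (Usum w) \<in> uce_rel V"
  using v[unfolded free_on_def, simplified]
proof (induction v rule: pm_induct)
  case zero
  then show ?case using gen_zero_left[of "Usum w"] R_minus by fastforce
next
  case (step p c v)
  let ?x = "vbr V (fst p) (snd p)"
  let ?X = "pmlin (\<lambda>q. gen ?x (vbr V (fst q) (snd q))) w"
  let ?F = "\<lambda>p. pmlin (\<lambda>q. gen (vbr V (fst p) (snd p)) (vbr V (fst q) (snd q))) w"
  have p: "fst p \<in> vcarr V" "snd p \<in> vcarr V" using step by auto
  have U: "Usum (Poly_Mapping.single p c + v) = vadd V (vsmult V c ?x) (Usum v)"
    using p by (simp add: Usum_add Usum_single mem_Times_iff)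
  have "pmlin ?F (Poly_Mapping.single p c + v) - gen (Usum (Poly_Mapping.single p c + v)) (Usum w)
      = psm c (?X - gen ?x (Usum w)) + (pmlin ?F v - gen (Usum v) (Usum w))
        - (gen (vadd V (vsmult V c ?x) (Usum v)) (Usum w) - gen (vsmult V c ?x) (Usum w) - gen (Usum v) (Usum w))
        - (gen (vsmult V c ?x) (Usum w) - psm c (gen ?x (Usum w)))"
    by (simp add: U pmlin_add pmlin_single psm_diff)
  also have "\<dots> \<in> uce_rel V"
  proof -
    have h1: "?X - gen ?x (Usum w) \<in> uce_rel V" using br_inner[OF _ w, of ?x] p by simp
    have h2: "gen (vadd V (vsmult V c ?x) (Usum v)) (Usum w) - gen (vsmult V c ?x) (Usum w) - gen (Usum v) (Usum w) \<in> uce_rel V"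
      using p by (intro tr_al) auto
    have h3: "gen (vsmult V c ?x) (Usum w) - psm c (gen ?x (Usum w)) \<in> uce_rel V" using p by (intro tr_sl) auto
    show ?thesis by (rule R_diff[OF R_diff[OF R_add[OF R_psm[OF h1] step(3)] h2] h3])
  qed
  finally show ?case .
qed

lemma uce_br_ucls:
  assumes v: "v \<in> free_on (vcarr V)" and w: "w \<in> free_on (vcarr V)"
  shows "vbr (uce V) (ucls V v) (ucls V w) = ucls V (gen (Usum v) (Usum w))"
proof -
  have "vbr (uce V) (ucls V v) (ucls V w) =
     ucls V (pmlin (\<lambda>p. pmlin (\<lambda>q. gen (vbr V (fst p) (snd p)) (vbr V (fst q) (snd q))) (urep (ucls V w))) (urep (ucls V v)))"
    by (simp add: uce_def)
  also have "\<dots> = ucls V (gen (Usum (urep (ucls V v))) (Usum (urep (ucls V w))))"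
    by (rule ucls_eqI, rule br_outer) (auto intro: urep_F v w)
  finally show ?thesis by (simp add: Usum_urep)
qed

lemma DD_add:
  assumes d1: "d1 \<in> Der V" and d2: "d2 \<in> Der V" and v: "v \<in> free_on (vcarr V)"
  shows "DD (der_add V d1 d2) v - (DD d1 v + DD d2 v) \<in> uce_rel V"
proof -
  have "DD (der_add V d1 d2) v - (DD d1 v + DD d2 v) =
        pmlin (\<lambda>p. hD (der_add V d1 d2) p - (hD d1 p + hD d2 p)) v"
    by (simp add: DD_def pmlin_fun_diff pmlin_fun_add)
  also have "\<dots> \<in> uce_rel V"
  proof (rule pmlin_in_R)
    fix p assume "p \<in> Poly_Mapping.keys v"
    then have p: "fst p \<in> vcarr V" "snd p \<in> vcarr V" using free_keys[OF v] by auto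
    have "hD (der_add V d1 d2) p - (hD d1 p + hD d2 p) =
       (gen (vadd V (d1 (fst p)) (d2 (fst p))) (valpha V (snd p)) - gen (d1 (fst p)) (valpha V (snd p)) - gen (d2 (fst p)) (valpha V (snd p)))
     + (gen (valpha V (fst p)) (vadd V (d1 (snd p)) (d2 (snd p))) - gen (valpha V (fst p)) (d1 (snd p)) - gen (valpha V (fst p)) (d2 (snd p)))"
      using p by (simp add: hD_def der_add_def algebra_simps)
    also have "\<dots> \<in> uce_rel V" using p d1 d2 by (intro R_add tr_al tr_ar) (auto simp: Der_in)
    finally show "hD (der_add V d1 d2) p - (hD d1 p + hD d2 p) \<in> uce_rel V" .
  qed
  finally show ?thesis .
qed

lemma DD_sm:
  assumes d: "d \<in> Der V" and v: "v \<in> free_on (vcarr V)"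
  shows "DD (der_smult V c d) v - psm c (DD d v) \<in> uce_rel V"
proof -
  have "DD (der_smult V c d) v - psm c (DD d v) =
        pmlin (\<lambda>p. hD (der_smult V c d) p - psm c (hD d p)) v"
    by (simp add: DD_def pmlin_fun_diff pmlin_fun_psm)
  also have "\<dots> \<in> uce_rel V"
  proof (rule pmlin_in_R)
    fix p assume "p \<in> Poly_Mapping.keys v"
    then have p: "fst p \<in> vcarr V" "snd p \<in> vcarr V" using free_keys[OF v] by auto
    have "hD (der_smult V c d) p - psm c (hD d p) =
       (gen (vsmult V c (d (fst p))) (valpha V (snd p)) - psm c (gen (d (fst p)) (valpha V (snd p))))
     + (gen (valpha V (fst p)) (vsmult V c (d (snd p))) - psm c (gen (valpha V (fst p)) (d (snd p))))"
      using p by (simp add: hD_def der_smult_def psm_add_right algebra_simps)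
    also have "\<dots> \<in> uce_rel V" using p d by (intro R_add tr_sl tr_sr) (auto simp: Der_in)
    finally show "hD (der_smult V c d) p - psm c (hD d p) \<in> uce_rel V" .
  qed
  finally show ?thesis .
qed

end


context pf begin

lemma uce_elim:
  assumes "X \<in> vcarr (uce V)"
  obtains v where "v \<in> free_on (vcarr V)" "X = ucls V v"
  using assms by (auto simp: uce_carr)

lemma Usum_rep_ex: "x \<in> vcarr V \<Longrightarrow> (SOME v. v \<in> free_on (vcarr V) \<and> Usum v = x) \<in> free_on (vcarr V) \<and>
   Usum (SOME v. v \<in> free_on (vcarr V) \<and> Usum v = x) = x"
  using Usum_surj by (metis (mono_tags, lifting) someI_ex)

lemma gen_F: "a \<in> vcarr V \<Longrightarrow> b \<in> vcarr V \<Longrightarrow> gen a b \<in> free_on (vcarr V)"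
  by (rule free_on_gen)

lemma uceU_in: "X \<in> vcarr (uce V) \<Longrightarrow> uceU V X \<in> vcarr V"
  by (erule uce_elim) (simp add: uceU_ucls)

lemma uce_add_in: "X \<in> vcarr (uce V) \<Longrightarrow> Y \<in> vcarr (uce V) \<Longrightarrow> vadd (uce V) X Y \<in> vcarr (uce V)"
  by (auto elim!: uce_elim simp: uce_add ucls_in_uce free_on_add)
lemma uce_sm_in: "X \<in> vcarr (uce V) \<Longrightarrow> vsmult (uce V) c X \<in> vcarr (uce V)"
  by (auto elim!: uce_elim simp: uce_sm ucls_in_uce free_on_psm)
lemma uce_alpha_in: "X \<in> vcarr (uce V) \<Longrightarrow> valpha (uce V) X \<in> vcarr (uce V)"
  by (auto elim!: uce_elim simp: uce_alpha_ucls ucls_in_uce AA_F)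
lemma uce_br_eq: "X \<in> vcarr (uce V) \<Longrightarrow> Y \<in> vcarr (uce V) \<Longrightarrow>
    vbr (uce V) X Y = ucls V (gen (uceU V X) (uceU V Y))"
  by (auto elim!: uce_elim simp: uce_br_ucls uceU_ucls)
lemma uce_br_in: "X \<in> vcarr (uce V) \<Longrightarrow> Y \<in> vcarr (uce V) \<Longrightarrow> vbr (uce V) X Y \<in> vcarr (uce V)"
  by (simp add: uce_br_eq ucls_in_uce gen_F uceU_in)

lemma uceU_add: "X \<in> vcarr (uce V) \<Longrightarrow> Y \<in> vcarr (uce V) \<Longrightarrow>
   uceU V (vadd (uce V) X Y) = vadd V (uceU V X) (uceU V Y)"
  by (auto elim!: uce_elim simp: uce_add uceU_ucls free_on_add Usum_add)
lemma uceU_sm: "X \<in> vcarr (uce V) \<Longrightarrow> uceU V (vsmult (uce V) c X) = vsmult V c (uceU V X)"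
  by (auto elim!: uce_elim simp: uce_sm uceU_ucls free_on_psm Usum_psm)
lemma uceU_alpha: "X \<in> vcarr (uce V) \<Longrightarrow> uceU V (valpha (uce V) X) = valpha V (uceU V X)"
  by (auto elim!: uce_elim simp: uce_alpha_ucls uceU_ucls AA_F Usum_AA)
lemma uceU_br: "X \<in> vcarr (uce V) \<Longrightarrow> Y \<in> vcarr (uce V) \<Longrightarrow>
   uceU V (vbr (uce V) X Y) = vbr V (uceU V X) (uceU V Y)"
  by (simp add: uce_br_eq uceU_ucls gen_F uceU_in Usum_gen)

lemma DD_AA:
  assumes d: "d \<in> Der V" and v: "v \<in> free_on (vcarr V)"
  shows "DD d (AA v) = AA (DD d v)"
  unfolding DD_def AA_def pmlin_pmlin
proof (rule pmlin_cong)
  fix p assume "p \<in> Poly_Mapping.keys v"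
  then have p: "fst p \<in> vcarr V" "snd p \<in> vcarr V" using free_keys[OF v] by auto
  then show "pmlin (hD d) (hA p) = pmlin hA (hD d p)"
    using d by (simp add: hA_def hD_def pmlin_add Der_alpha)
qed

lemma DD_gen: "DD d (gen a b) = gen (d a) (valpha V b) + gen (valpha V a) (d b)"
  by (simp add: DD_def hD_def)

lemma uce_der_Der:
  assumes d: "d \<in> Der V"
  shows "uce_der V d \<in> Der (uce V)"
proof (rule DerI)
  show "uce_der V d \<in> extensional (vcarr (uce V))" by (simp add: uce_der_def)
next
  fix X assume "X \<in> vcarr (uce V)"
  then show "uce_der V d X \<in> vcarr (uce V)"
    by (auto elim!: uce_elim simp: uce_der_ucls[OF d] ucls_in_uce DD_F[OF d])
next
  fix X Y assume X: "X \<in> vcarr (uce V)" and Y: "Y \<in> vcarr (uce V)"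
  obtain v where v: "v \<in> free_on (vcarr V)" "X = ucls V v" using X by (rule uce_elim)
  obtain w where w: "w \<in> free_on (vcarr V)" "Y = ucls V w" using Y by (rule uce_elim)
  show "uce_der V d (vadd (uce V) X Y) = vadd (uce V) (uce_der V d X) (uce_der V d Y)"
    using v w d by (simp add: uce_add uce_der_ucls free_on_add DD_def pmlin_add)
  show "uce_der V d (vbr (uce V) X Y) =
       vadd (uce V) (vbr (uce V) (valpha (uce V) X) (uce_der V d Y)) (vbr (uce V) (uce_der V d X) (valpha (uce V) Y))"
    using v w d
    by (simp add: uce_br_ucls uce_der_ucls uce_alpha_ucls uce_add gen_F DD_F AA_F Usum_AA Usum_DD
        DD_gen add.commute)
next
  fix c X assume X: "X \<in> vcarr (uce V)"
  obtain v where v: "v \<in> free_on (vcarr V)" "X = ucls V v" using X by (rule uce_elim)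
  show "uce_der V d (vsmult (uce V) c X) = vsmult (uce V) c (uce_der V d X)"
    using v d by (simp add: uce_sm uce_der_ucls free_on_psm DD_def pmlin_psm)
next
  fix X assume X: "X \<in> vcarr (uce V)"
  obtain v where v: "v \<in> free_on (vcarr V)" "X = ucls V v" using X by (rule uce_elim)
  show "uce_der V d (valpha (uce V) X) = valpha (uce V) (uce_der V d X)"
    using v d by (simp add: uce_alpha_ucls uce_der_ucls AA_F DD_F DD_AA)
qed

lemma uceU_uce_der:
  assumes d: "d \<in> Der V" and X: "X \<in> vcarr (uce V)"
  shows "uceU V (uce_der V d X) = d (uceU V X)"
  using X by (auto elim!: uce_elim simp: uce_der_ucls[OF d] uceU_ucls DD_F[OF d] Usum_DD[OF d])

lemma ker_U: "X \<in> hl_ker (uce V) V (uceU V) \<longleftrightarrow> X \<in> vcarr (uce V) \<and> uceU V X = vzero V"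
  by (simp add: hl_ker_def)

lemma uce_der_ker:
  assumes d: "d \<in> Der V"
  shows "uce_der V d ` hl_ker (uce V) V (uceU V) \<subseteq> hl_ker (uce V) V (uceU V)"
  using d uce_der_Der[OF d] by (auto simp: ker_U uceU_uce_der Der_zero Der_in)

lemma uce_zero_eq: "ucls V (0::'a\<times>'a\<Rightarrow>\<^sub>0'k) = vsmult (uce V) 0 (ucls V 0)"
  by (simp add: uce_sm)

lemma Der_uce_zero:
  assumes "\<delta> \<in> Der (uce V)"
  shows "\<delta> (ucls V 0) = ucls V 0"
proof -
  have z: "ucls V 0 \<in> vcarr (uce V)" by (simp add: ucls_in_uce)
  have "\<delta> (ucls V 0) = vsmult (uce V) 0 (\<delta> (ucls V 0))"
    using Der_sm[OF assms z, of 0] uce_zero_eq by simp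
  moreover obtain u where "\<delta> (ucls V 0) = ucls V u" using Der_in[OF assms z] by (auto elim: uce_elim)
  ultimately show ?thesis by (simp add: uce_sm)
qed

lemma Der_uce_unique:
  assumes d1: "\<delta>1 \<in> Der (uce V)" and d2: "\<delta>2 \<in> Der (uce V)"
    and eq: "\<And>X. X \<in> vcarr (uce V) \<Longrightarrow> uceU V (\<delta>1 X) = uceU V (\<delta>2 X)"
  shows "\<delta>1 = \<delta>2"
proof (rule Der_eqI[OF d1 d2])
  have gen_eq: "\<delta>1 (ucls V (gen a b)) = \<delta>2 (ucls V (gen a b))" if ab: "a \<in> vcarr V" "b \<in> vcarr V" for a b
  proof -
    obtain va where va: "va \<in> free_on (vcarr V)" "Usum va = a" using Usum_surj ab by blast
    obtain vb where vb: "vb \<in> free_on (vcarr V)" "Usum vb = b" using Usum_surj ab by blast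
    let ?P = "ucls V va" and ?Q = "ucls V vb"
    have PQ: "?P \<in> vcarr (uce V)" "?Q \<in> vcarr (uce V)" using va vb by (simp_all add: ucls_in_uce)
    have g: "ucls V (gen a b) = vbr (uce V) ?P ?Q" using va vb by (simp add: uce_br_ucls)
    have aP: "valpha (uce V) ?P \<in> vcarr (uce V)" and aQ: "valpha (uce V) ?Q \<in> vcarr (uce V)"
      using PQ by (simp_all add: uce_alpha_in)
    have b1: "vbr (uce V) (valpha (uce V) ?P) (\<delta>1 ?Q) = ucls V (gen (uceU V (valpha (uce V) ?P)) (uceU V (\<delta>1 ?Q)))"
      by (rule uce_br_eq[OF aP Der_in[OF d1 PQ(2)]])
    have b2: "vbr (uce V) (valpha (uce V) ?P) (\<delta>2 ?Q) = ucls V (gen (uceU V (valpha (uce V) ?P)) (uceU V (\<delta>2 ?Q)))"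
      by (rule uce_br_eq[OF aP Der_in[OF d2 PQ(2)]])
    have b3: "vbr (uce V) (\<delta>1 ?P) (valpha (uce V) ?Q) = ucls V (gen (uceU V (\<delta>1 ?P)) (uceU V (valpha (uce V) ?Q)))"
      by (rule uce_br_eq[OF Der_in[OF d1 PQ(1)] aQ])
    have b4: "vbr (uce V) (\<delta>2 ?P) (valpha (uce V) ?Q) = ucls V (gen (uceU V (\<delta>2 ?P)) (uceU V (valpha (uce V) ?Q)))"
      by (rule uce_br_eq[OF Der_in[OF d2 PQ(1)] aQ])
    have "\<delta>1 (vbr (uce V) ?P ?Q) = \<delta>2 (vbr (uce V) ?P ?Q)"
      by (simp only: Der_br[OF d1 PQ] Der_br[OF d2 PQ] b1 b2 b3 b4 eq[OF PQ(1)] eq[OF PQ(2)])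
    then show ?thesis by (simp add: g)
  qed
  fix X assume X: "X \<in> vcarr (uce V)"
  then obtain v where v: "v \<in> free_on (vcarr V)" "X = ucls V v" by (rule uce_elim)
  have "Poly_Mapping.keys v \<subseteq> vcarr V \<times> vcarr V" using v by (simp add: free_on_def)
  then have "\<delta>1 (ucls V v) = \<delta>2 (ucls V v)"
  proof (induction v rule: pm_induct)
    case zero
    then show ?case using Der_uce_zero[OF d1] Der_uce_zero[OF d2] by simp
  next
    case (step p c w)
    obtain a b where p: "p = (a, b)" "a \<in> vcarr V" "b \<in> vcarr V" using step by (cases p) auto
    have wf: "w \<in> free_on (vcarr V)" using step by (simp add: free_on_def)
    have G: "ucls V (gen a b) \<in> vcarr (uce V)" using p by (simp add: ucls_in_uce gen_F)
    have W: "ucls V w \<in> vcarr (uce V)" using wf by (simp add: ucls_in_uce)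
    have e: "ucls V (Poly_Mapping.single p c + w) = vadd (uce V) (vsmult (uce V) c (ucls V (gen a b))) (ucls V w)"
      by (simp add: uce_sm uce_add psm_gen p)
    show ?case unfolding e
      using d1 d2 G W step(3) gen_eq[OF p(2,3)]
      by (simp add: Der_add Der_sm uce_sm_in)
  qed
  then show "\<delta>1 X = \<delta>2 X" using v by simp
qed

lemma uce_der_inj:
  assumes d1: "d1 \<in> Der V" and d2: "d2 \<in> Der V" and eq: "uce_der V d1 = uce_der V d2"
  shows "d1 = d2"
proof (rule Der_eqI[OF d1 d2])
  fix x assume "x \<in> vcarr V"
  then obtain v where v: "v \<in> free_on (vcarr V)" "Usum v = x" using Usum_surj by blast
  have "d1 x = uceU V (uce_der V d1 (ucls V v))"
    using v d1 by (simp add: uceU_uce_der ucls_in_uce uceU_ucls)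
  also have "\<dots> = d2 x" using v d2 by (simp add: eq uceU_uce_der ucls_in_uce uceU_ucls)
  finally show "d1 x = d2 x" .
qed

lemma uce_der_surj:
  assumes \<delta>: "\<delta> \<in> Der (uce V)"
    and ker: "\<delta> ` hl_ker (uce V) V (uceU V) \<subseteq> hl_ker (uce V) V (uceU V)"
  shows "\<exists>d\<in>Der V. uce_der V d = \<delta>"
proof -
  define rep where "rep x = (SOME v. v \<in> free_on (vcarr V) \<and> Usum v = x)" for x
  have rep: "rep x \<in> free_on (vcarr V)" "Usum (rep x) = x" if "x \<in> vcarr V" for x
    using Usum_rep_ex[OF that] by (simp_all add: rep_def)
  define d where "d = (\<lambda>x\<in>vcarr V. uceU V (\<delta> (ucls V (rep x))))"
  have K: "uceU V (\<delta> X) = uceU V (\<delta> Y)"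
    if X: "X \<in> vcarr (uce V)" and Y: "Y \<in> vcarr (uce V)" and e: "uceU V X = uceU V Y" for X Y
  proof -
    obtain v where v: "v \<in> free_on (vcarr V)" "X = ucls V v" using X by (rule uce_elim)
    obtain w where w: "w \<in> free_on (vcarr V)" "Y = ucls V w" using Y by (rule uce_elim)
    let ?K = "ucls V (v - w)"
    have Kc: "?K \<in> vcarr (uce V)" using v w by (simp add: ucls_in_uce free_on_diff)
    have "uceU V ?K = vzero V"
      using v w e by (simp add: uceU_ucls free_on_diff Usum_diff)
    then have "?K \<in> hl_ker (uce V) V (uceU V)" using Kc by (simp add: ker_U)
    then have "\<delta> ?K \<in> hl_ker (uce V) V (uceU V)" using ker by blast
    then have dK: "uceU V (\<delta> ?K) = vzero V" by (simp add: ker_U)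
    have "X = vadd (uce V) Y ?K" using v w by (simp add: uce_add)
    then have "uceU V (\<delta> X) = vadd V (uceU V (\<delta> Y)) (uceU V (\<delta> ?K))"
      using Y Kc \<delta> by (simp add: Der_add uceU_add Der_in)
    then show ?thesis using dK Y \<delta> by (simp add: uceU_in Der_in)
  qed
  have dU: "d (uceU V X) = uceU V (\<delta> X)" if X: "X \<in> vcarr (uce V)" for X
  proof -
    have u: "uceU V X \<in> vcarr V" using X by (rule uceU_in)
    have "d (uceU V X) = uceU V (\<delta> (ucls V (rep (uceU V X))))" using u by (simp add: d_def)
    also have "\<dots> = uceU V (\<delta> X)"
      using rep[OF u] X by (intro K) (simp_all add: ucls_in_uce uceU_ucls)
    finally show ?thesis .
  qed
  have pre: "\<exists>X\<in>vcarr (uce V). uceU V X = x" if "x \<in> vcarr V" for x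
    using rep[OF that] by (intro bexI[of _ "ucls V (rep x)"]) (simp_all add: ucls_in_uce uceU_ucls)
  have dD: "d \<in> Der V"
  proof (rule DerI)
    show "d \<in> extensional (vcarr V)" by (simp add: d_def)
  next
    fix x assume "x \<in> vcarr V"
    then obtain X where X: "X \<in> vcarr (uce V)" "uceU V X = x" using pre by blast
    then show "d x \<in> vcarr V" using dU \<delta> by (metis Der_in uceU_in)
    fix c
    show "d (vsmult V c x) = vsmult V c (d x)"
      using X \<delta> dU[of X] dU[of "vsmult (uce V) c X"]
      by (metis Der_sm uceU_sm uce_sm_in Der_in)
    show "d (valpha V x) = valpha V (d x)"
      using X \<delta> dU[of X] dU[of "valpha (uce V) X"]
      by (metis Der_alpha uceU_alpha uce_alpha_in Der_in)
  next
    fix x y assume "x \<in> vcarr V" "y \<in> vcarr V"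
    then obtain X Y where X: "X \<in> vcarr (uce V)" "uceU V X = x" and Y: "Y \<in> vcarr (uce V)" "uceU V Y = y"
      using pre by metis
    show "d (vadd V x y) = vadd V (d x) (d y)"
      using X Y \<delta> dU[of X] dU[of Y] dU[of "vadd (uce V) X Y"]
      by (metis Der_add uceU_add uce_add_in Der_in)
    have "d (vbr V x y) = uceU V (\<delta> (vbr (uce V) X Y))"
      using X Y dU[of "vbr (uce V) X Y"] by (simp add: uceU_br uce_br_in)
    also have "\<dots> = vadd V (vbr V (valpha V x) (d y)) (vbr V (d x) (valpha V y))"
      using X Y \<delta> dU[of X] dU[of Y]
      by (simp add: Der_br uceU_add uceU_br uceU_alpha uce_br_in uce_alpha_in Der_in)
    finally show "d (vbr V x y) = vadd V (vbr V (valpha V x) (d y)) (vbr V (d x) (valpha V y))" .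
  qed
  have "uce_der V d = \<delta>"
    by (rule Der_uce_unique[OF uce_der_Der[OF dD] \<delta>]) (simp add: uceU_uce_der[OF dD] dU)
  then show ?thesis using dD by blast
qed

theorem part_c:
  "der_lin_iso V (uce V) (Der V)
     {\<delta> \<in> Der (uce V). \<delta> ` hl_ker (uce V) V (uceU V) \<subseteq> hl_ker (uce V) V (uceU V)} (uce_der V)"
  unfolding der_lin_iso_def
proof (intro conjI ballI allI)
  show "bij_betw (uce_der V) (Der V)
     {\<delta> \<in> Der (uce V). \<delta> ` hl_ker (uce V) V (uceU V) \<subseteq> hl_ker (uce V) V (uceU V)}"
    unfolding bij_betw_def
  proof
    show "inj_on (uce_der V) (Der V)" by (auto intro: inj_onI uce_der_inj)
    show "uce_der V ` Der V = {\<delta> \<in> Der (uce V). \<delta> ` hl_ker (uce V) V (uceU V) \<subseteq> hl_ker (uce V) V (uceU V)}"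
      using uce_der_surj uce_der_Der uce_der_ker by fastforce
  qed
next
  fix d1 d2 assume d1: "d1 \<in> Der V" and d2: "d2 \<in> Der V"
  show "uce_der V (der_add V d1 d2) = der_add (uce V) (uce_der V d1) (uce_der V d2)"
  proof
    fix X
    show "uce_der V (der_add V d1 d2) X = der_add (uce V) (uce_der V d1) (uce_der V d2) X"
    proof (cases "X \<in> vcarr (uce V)")
      case True
      then obtain v where v: "v \<in> free_on (vcarr V)" "X = ucls V v" by (rule uce_elim)
      have "uce_der V (der_add V d1 d2) X = ucls V (DD (der_add V d1 d2) v)"
        using v Der_closed_add[OF d1 d2] by (simp add: uce_der_ucls)
      also have "\<dots> = ucls V (DD d1 v + DD d2 v)" by (rule ucls_eqI, rule DD_add[OF d1 d2 v(1)])
      also have "\<dots> = der_add (uce V) (uce_der V d1) (uce_der V d2) X"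
        using v d1 d2 True by (simp add: der_add_def uce_der_ucls uce_add)
      finally show ?thesis .
    next
      case False
      then show ?thesis by (simp add: uce_der_def der_add_def)
    qed
  qed
next
  fix c d assume d: "d \<in> Der V"
  show "uce_der V (der_smult V c d) = der_smult (uce V) c (uce_der V d)"
  proof
    fix X
    show "uce_der V (der_smult V c d) X = der_smult (uce V) c (uce_der V d) X"
    proof (cases "X \<in> vcarr (uce V)")
      case True
      then obtain v where v: "v \<in> free_on (vcarr V)" "X = ucls V v" by (rule uce_elim)
      have "uce_der V (der_smult V c d) X = ucls V (DD (der_smult V c d) v)"
        using v Der_closed_sm[OF d] by (simp add: uce_der_ucls)
      also have "\<dots> = ucls V (psm c (DD d v))" by (rule ucls_eqI, rule DD_sm[OF d v(1)])
      also have "\<dots> = der_smult (uce V) c (uce_der V d) X"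
        using v d True by (simp add: der_smult_def uce_der_ucls uce_sm)
      finally show ?thesis .
    next
      case False
      then show ?thesis by (simp add: uce_der_def der_smult_def)
    qed
  qed
qed

end


locale cov = L: pf L + L': pf L'
  for L :: "('k::field, 'a, 'm) hlalg_scheme" and L' :: "('k, 'b, 'n) hlalg_scheme" +
  fixes f :: "'b \<Rightarrow> 'a"
  assumes hom: "hl_hom L' L f"
    and surj: "f ` vcarr L' = vcarr L"
    and kerc: "hl_ker L' L f \<subseteq> hl_center L'"
begin

lemma f_in[simp]: "x \<in> vcarr L' \<Longrightarrow> f x \<in> vcarr L" using hom by (simp add: hl_hom_def)
lemma f_add: "x \<in> vcarr L' \<Longrightarrow> y \<in> vcarr L' \<Longrightarrow> f (vadd L' x y) = vadd L (f x) (f y)"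
  using hom by (simp add: hl_hom_def)
lemma f_sm: "x \<in> vcarr L' \<Longrightarrow> f (vsmult L' c x) = vsmult L c (f x)"
  using hom by (simp add: hl_hom_def)
lemma f_br: "x \<in> vcarr L' \<Longrightarrow> y \<in> vcarr L' \<Longrightarrow> f (vbr L' x y) = vbr L (f x) (f y)"
  using hom by (simp add: hl_hom_def)
lemma f_alpha: "x \<in> vcarr L' \<Longrightarrow> f (valpha L' x) = valpha L (f x)"
  using hom by (simp add: hl_hom_def)
lemma lin_f: "lin_on L' L f" by (simp add: lin_on_def f_add f_sm)
lemma f_zero[simp]: "f (vzero L') = vzero L"
  by (rule lin_zero[OF L'.vs_axioms L.vs_axioms lin_f])

lemma in_ker: "k \<in> hl_ker L' L f \<longleftrightarrow> k \<in> vcarr L' \<and> f k = vzero L"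
  by (simp add: hl_ker_def)

lemma ker_central: "k \<in> vcarr L' \<Longrightarrow> f k = vzero L \<Longrightarrow> z \<in> vcarr L' \<Longrightarrow>
   vbr L' k z = vzero L' \<and> vbr L' z k = vzero L'"
  using kerc by (auto simp: hl_center_def hl_ker_def)

lemma key_left:
  assumes x: "x \<in> vcarr L'" and y: "y \<in> vcarr L'" and z: "z \<in> vcarr L'" and e: "f x = f y"
  shows "vbr L' x z = vbr L' y z" "vbr L' z x = vbr L' z y"
proof -
  let ?k = "vadd L' x (vsmult L' (-1) y)"
  have k: "?k \<in> vcarr L'" using x y by simp
  have fk: "f ?k = vzero L" using x y e by (simp add: f_add f_sm)
  have xe: "x = vadd L' y ?k" using L'.decomp[OF x y] .
  show "vbr L' x z = vbr L' y z"
    using ker_central[OF k fk z] x y z k by (subst xe) (simp add: L'.br_add_left)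
  show "vbr L' z x = vbr L' z y"
    using ker_central[OF k fk z] x y z k by (subst xe) (simp add: L'.br_add_right)
qed

lemma key:
  assumes "x \<in> vcarr L'" "x' \<in> vcarr L'" "z \<in> vcarr L'" "z' \<in> vcarr L'" "f x = f x'" "f z = f z'"
  shows "vbr L' x z = vbr L' x' z'"
  using key_left[OF assms(1,2,3,5)] key_left[OF assms(3,4,2,6)] by simp

subsection \<open>uce(f) on representatives\<close>

definition hM where "hM p = gen (f (fst p)) (f (snd p))"
definition MM where "MM v = pmlin hM v"

lemma MM_R:
  assumes r: "r \<in> uce_rel L'"
  shows "MM r \<in> uce_rel L"
  unfolding MM_def using r unfolding uce_rel_def
proof (rule pmlin_pspan[rotated])
  fix g assume "g \<in> tensor_rels L' \<union> I_gens L'"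
  then have "pmlin hM g \<in> uce_rel L"
  proof
    assume "g \<in> tensor_rels L'"
    then show ?thesis
    proof (cases rule: L'.tensor_rels_cases)
      case (al a a' b)
      then show ?thesis unfolding al(4) using al(1-3)
        by (simp add: pmlin_diff hM_def f_add L.tr_al)
    next
      case (ar a b b')
      then show ?thesis unfolding ar(4) using ar(1-3)
        by (simp add: pmlin_diff hM_def f_add L.tr_ar)
    next
      case (sl c a b)
      then show ?thesis unfolding sl(3) using sl(1-2)
        by (simp add: pmlin_diff pmlin_psm hM_def f_sm L.tr_sl)
    next
      case (sr c a b)
      then show ?thesis unfolding sr(3) using sr(1-2)
        by (simp add: pmlin_diff pmlin_psm hM_def f_sm L.tr_sr)
    qed
  next
    assume "g \<in> I_gens L'"
    then show ?thesis
    proof (cases rule: L'.I_gens_cases)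
      case (1 x1 x2 x3)
      have "pmlin hM g = - gen (vbr L (f x1) (f x2)) (valpha L (f x3))
          + gen (vbr L (f x1) (f x3)) (valpha L (f x2))
          + gen (valpha L (f x1)) (vbr L (f x2) (f x3))"
        unfolding 1(4) using 1(1-3) by (simp add: pmlin_add pmlin_minus pmlin_diff hM_def f_br f_alpha)
      also have "\<dots> \<in> uce_rel L" by (rule L.tr_I) (use 1 in auto)
      finally show ?thesis .
    qed
  qed
  then show "pmlin hM g \<in> pspan (tensor_rels L \<union> I_gens L)" by (simp add: uce_rel_def)
qed

lemma MM_F:
  assumes "v \<in> free_on (vcarr L')"
  shows "MM v \<in> free_on (vcarr L)"
  unfolding MM_def
proof (rule free_on_pmlin)
  fix p assume "p \<in> Poly_Mapping.keys v"
  then have p: "fst p \<in> vcarr L'" "snd p \<in> vcarr L'" using L'.free_keys[OF assms] by auto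
  show "hM p \<in> free_on (vcarr L)" unfolding hM_def by (intro free_on_gen) (use p in auto)
qed

lemma uce_map_ucls: "uce_map L f (ucls L' v) = ucls L (MM v)"
proof -
  have "uce_map L f (ucls L' v) = ucls L (pmlin hM (urep (ucls L' v)))"
    by (simp add: uce_map_def hM_def[abs_def])
  also have "\<dots> = ucls L (pmlin hM v)"
    by (rule pmlin_ucls) (use MM_R in \<open>simp add: MM_def\<close>)
  finally show ?thesis by (simp add: MM_def)
qed

lemma Usum_MM:
  assumes v: "v \<in> free_on (vcarr L')"
  shows "L.Usum (MM v) = f (L'.Usum v)"
proof -
  have "L.Usum (MM v) = L.Lin (\<lambda>p. L.Usum (hM p)) v" by (simp add: MM_def L.Usum_pmlin)
  also have "\<dots> = L.Lin (\<lambda>p. f (L'.gU p)) v"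
  proof (rule L.Lin_cong)
    fix p assume "p \<in> Poly_Mapping.keys v"
    then have p: "fst p \<in> vcarr L'" "snd p \<in> vcarr L'" using L'.free_keys[OF v] by auto
    then show "L.Usum (hM p) = f (L'.gU p)"
      by (simp add: hM_def L.Usum_gen L'.gU_def f_br mem_Times_iff)
  qed
  also have "\<dots> = f (L'.Lin L'.gU v)"
    by (rule lin_Lin[symmetric, OF L'.vs_axioms L.vs_axioms lin_f L'.gU_in])
  finally show ?thesis by (simp add: L'.Usum_def)
qed

lemma MM_DD:
  assumes d: "d \<in> Der L" and \<delta>: "\<delta> \<in> Der L'" and comm: "\<And>x. x \<in> vcarr L' \<Longrightarrow> f (\<delta> x) = d (f x)"
    and v: "v \<in> free_on (vcarr L')"
  shows "MM (L'.DD \<delta> v) = L.DD d (MM v)"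
  unfolding MM_def L'.DD_def L.DD_def pmlin_pmlin
proof (rule pmlin_cong)
  fix p assume "p \<in> Poly_Mapping.keys v"
  then have p: "fst p \<in> vcarr L'" "snd p \<in> vcarr L'" using L'.free_keys[OF v] by auto
  then show "pmlin hM (L'.hD \<delta> p) = pmlin (L.hD d) (hM p)"
    using \<delta> by (simp add: hM_def L'.hD_def L.hD_def pmlin_add comm f_alpha Der_in)
qed

lemma uceU_ker_elim:
  assumes "Y \<in> hl_ker (uce L') L' (uceU L')"
  obtains v where "v \<in> free_on (vcarr L')" "Y = ucls L' v" "L'.Usum v = vzero L'"
  using assms by (auto simp: hl_ker_def L'.uce_carr L'.uceU_ucls)

lemma a_only_if:
  assumes d: "d \<in> Der L" and \<delta>: "\<delta> \<in> Der L'" and comm: "\<And>x. x \<in> vcarr L' \<Longrightarrow> f (\<delta> x) = d (f x)"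
  shows "uce_der L d ` (uce_map L f ` hl_ker (uce L') L' (uceU L')) \<subseteq> uce_map L f ` hl_ker (uce L') L' (uceU L')"
proof
  fix Z assume "Z \<in> uce_der L d ` (uce_map L f ` hl_ker (uce L') L' (uceU L'))"
  then obtain Y where Y: "Y \<in> hl_ker (uce L') L' (uceU L')" and Z: "Z = uce_der L d (uce_map L f Y)" by auto
  obtain v where v: "v \<in> free_on (vcarr L')" "Y = ucls L' v" "L'.Usum v = vzero L'"
    using Y by (rule uceU_ker_elim)
  have "Z = ucls L (L.DD d (MM v))"
    using v d by (simp add: Z uce_map_ucls L.uce_der_ucls MM_F)
  also have "\<dots> = uce_map L f (ucls L' (L'.DD \<delta> v))"
    by (simp add: uce_map_ucls MM_DD[OF d \<delta> comm v(1)])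
  finally have Z2: "Z = uce_map L f (ucls L' (L'.DD \<delta> v))" .
  have "ucls L' (L'.DD \<delta> v) \<in> hl_ker (uce L') L' (uceU L')"
    using v \<delta> by (simp add: hl_ker_def L'.ucls_in_uce L'.DD_F L'.uceU_ucls L'.Usum_DD L'.Der_zero)
  then show "Z \<in> uce_map L f ` hl_ker (uce L') L' (uceU L')" using Z2 by blast
qed

end


context cov begin

definition s where "s y = (SOME x. x \<in> vcarr L' \<and> f x = y)"
lemma s: assumes "y \<in> vcarr L" shows "s y \<in> vcarr L'" "f (s y) = y"
proof -
  have "y \<in> f ` vcarr L'" using assms surj by simp
  then have "\<exists>x. x \<in> vcarr L' \<and> f x = y" by blast
  then have "s y \<in> vcarr L' \<and> f (s y) = y" unfolding s_def by (rule someI_ex)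
  then show "s y \<in> vcarr L'" "f (s y) = y" by auto
qed

definition gP where "gP p = (if p \<in> vcarr L \<times> vcarr L then vbr L' (s (fst p)) (s (snd p)) else vzero L')"
definition Phi where "Phi v = L'.Lin gP v"

lemma gP_in[simp]: "gP p \<in> vcarr L'" by (auto simp: gP_def s)
lemma Phi_in[simp]: "Phi v \<in> vcarr L'" by (simp add: Phi_def)
lemma Phi_add: "Phi (v + w) = vadd L' (Phi v) (Phi w)" by (simp add: Phi_def L'.Lin_add)
lemma Phi_psm: "Phi (psm c v) = vsmult L' c (Phi v)" by (simp add: Phi_def L'.Lin_psm)
lemma Phi_minus: "Phi (- v) = vsmult L' (-1) (Phi v)" by (simp add: Phi_def L'.Lin_minus)
lemma Phi_diff: "Phi (v - w) = vadd L' (Phi v) (vsmult L' (-1) (Phi w))" by (simp add: Phi_def L'.Lin_diff)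
lemma Phi_gen: "a \<in> vcarr L \<Longrightarrow> b \<in> vcarr L \<Longrightarrow> Phi (gen a b) = vbr L' (s a) (s b)"
  by (simp add: Phi_def L'.Lin_gen[OF gP_in] gP_def)

lemma s_br_add_left: assumes "a \<in> vcarr L" "a' \<in> vcarr L" "b \<in> vcarr L" shows
  "vbr L' (s (vadd L a a')) (s b) = vadd L' (vbr L' (s a) (s b)) (vbr L' (s a') (s b))"
proof -
  have "vbr L' (s (vadd L a a')) (s b) = vbr L' (vadd L' (s a) (s a')) (s b)"
    by (rule key_left(1)) (use assms in \<open>auto simp: s f_add\<close>)
  also have "\<dots> = vadd L' (vbr L' (s a) (s b)) (vbr L' (s a') (s b))"
    using assms by (simp add: L'.br_add_left s)
  finally show ?thesis .
qed
lemma s_br_add_right: assumes "a \<in> vcarr L" "b \<in> vcarr L" "b' \<in> vcarr L" shows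
  "vbr L' (s a) (s (vadd L b b')) = vadd L' (vbr L' (s a) (s b)) (vbr L' (s a) (s b'))"
proof -
  have "vbr L' (s a) (s (vadd L b b')) = vbr L' (s a) (vadd L' (s b) (s b'))"
    by (rule key_left(2)) (use assms in \<open>auto simp: s f_add\<close>)
  also have "\<dots> = vadd L' (vbr L' (s a) (s b)) (vbr L' (s a) (s b'))"
    using assms by (simp add: L'.br_add_right s)
  finally show ?thesis .
qed
lemma s_br_sm_left: assumes "a \<in> vcarr L" "b \<in> vcarr L" shows
  "vbr L' (s (vsmult L c a)) (s b) = vsmult L' c (vbr L' (s a) (s b))"
proof -
  have "vbr L' (s (vsmult L c a)) (s b) = vbr L' (vsmult L' c (s a)) (s b)"
    by (rule key_left(1)) (use assms in \<open>auto simp: s f_sm\<close>)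
  also have "\<dots> = vsmult L' c (vbr L' (s a) (s b))"
    using assms by (simp add: L'.br_sm_left s)
  finally show ?thesis .
qed
lemma s_br_sm_right: assumes "a \<in> vcarr L" "b \<in> vcarr L" shows
  "vbr L' (s a) (s (vsmult L c b)) = vsmult L' c (vbr L' (s a) (s b))"
proof -
  have "vbr L' (s a) (s (vsmult L c b)) = vbr L' (s a) (vsmult L' c (s b))"
    by (rule key_left(2)) (use assms in \<open>auto simp: s f_sm\<close>)
  also have "\<dots> = vsmult L' c (vbr L' (s a) (s b))"
    using assms by (simp add: L'.br_sm_right s)
  finally show ?thesis .
qed

lemma s_key: "x \<in> vcarr L' \<Longrightarrow> z \<in> vcarr L' \<Longrightarrow> a \<in> vcarr L \<Longrightarrow> b \<in> vcarr L \<Longrightarrow> f x = a \<Longrightarrow> f z = b \<Longrightarrow>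
   vbr L' (s a) (s b) = vbr L' x z"
  by (rule key) (auto simp: s)

lemma Phi_R:
  assumes r: "r \<in> uce_rel L"
  shows "Phi r = vzero L'"
  unfolding Phi_def
proof (rule Lin_pspan[OF L'.vs_axioms gP_in _ r[unfolded uce_rel_def]])
  fix g assume "g \<in> tensor_rels L \<union> I_gens L"
  then have "Phi g = vzero L'"
  proof
    assume "g \<in> tensor_rels L"
    then show ?thesis
    proof (cases rule: L.tensor_rels_cases)
      case (al a a' b)
      then show ?thesis unfolding al(4) using al(1-3)
        by (simp add: Phi_diff Phi_gen s_br_add_left s L'.cancel_sum)
    next
      case (ar a b b')
      then show ?thesis unfolding ar(4) using ar(1-3)
        by (simp add: Phi_diff Phi_gen s_br_add_right s L'.cancel_sum)
    next
      case (sl c a b)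
      then show ?thesis unfolding sl(3) using sl(1-2)
        by (simp add: Phi_diff Phi_gen Phi_psm s_br_sm_left s)
    next
      case (sr c a b)
      then show ?thesis unfolding sr(3) using sr(1-2)
        by (simp add: Phi_diff Phi_gen Phi_psm s_br_sm_right s)
    qed
  next
    assume "g \<in> I_gens L"
    then show ?thesis
    proof (cases rule: L.I_gens_cases)
      case (1 x1 x2 x3)
      note x = 1(1-3)
      define y1 y2 y3 where "y1 = s x1" "y2 = s x2" "y3 = s x3"
      have y: "y1 \<in> vcarr L'" "y2 \<in> vcarr L'" "y3 \<in> vcarr L'" "f y1 = x1" "f y2 = x2" "f y3 = x3"
        using x by (auto simp: y1_y2_y3_def s)
      have e1: "vbr L' (s (vbr L x1 x2)) (s (valpha L x3)) = vbr L' (vbr L' y1 y2) (valpha L' y3)"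
        using y by (intro s_key) (auto simp: f_br f_alpha)
      have e2: "vbr L' (s (vbr L x1 x3)) (s (valpha L x2)) = vbr L' (vbr L' y1 y3) (valpha L' y2)"
        using y by (intro s_key) (auto simp: f_br f_alpha)
      have e3: "vbr L' (s (valpha L x1)) (s (vbr L x2 x3)) = vbr L' (valpha L' y1) (vbr L' y2 y3)"
        using y by (intro s_key) (auto simp: f_br f_alpha)
      show ?thesis unfolding 1(4) using x y
        by (simp add: Phi_add Phi_diff Phi_gen e1 e2 e3 L'.leibniz L'.cancel_leib2)
    qed
  qed
  then show "L'.Lin gP g = vzero L'" by (simp add: Phi_def)
qed

lemma Phi_pmlin: "Phi (pmlin h v) = L'.Lin (\<lambda>p. Phi (h p)) v"
  unfolding Phi_def by (rule Lin_pmlin[OF L'.vs_axioms gP_in])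

lemma Phi_MM:
  assumes v: "v \<in> free_on (vcarr L')"
  shows "Phi (MM v) = L'.Usum v"
  unfolding MM_def Phi_pmlin L'.Usum_def
proof (rule L'.Lin_cong)
  fix p assume "p \<in> Poly_Mapping.keys v"
  then have p: "fst p \<in> vcarr L'" "snd p \<in> vcarr L'" using L'.free_keys[OF v] by auto
  then show "Phi (hM p) = L'.gU p"
    by (simp add: hM_def Phi_gen L'.gU_def mem_Times_iff s_key)
qed

lemma f_Phi:
  assumes v: "v \<in> free_on (vcarr L)"
  shows "f (Phi v) = L.Usum v"
proof -
  have "f (Phi v) = L.Lin (\<lambda>p. f (gP p)) v"
    unfolding Phi_def by (rule lin_Lin[OF L'.vs_axioms L.vs_axioms lin_f gP_in])
  also have "\<dots> = L.Usum v" unfolding L.Usum_def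
  proof (rule L.Lin_cong)
    fix p assume "p \<in> Poly_Mapping.keys v"
    then have p: "fst p \<in> vcarr L" "snd p \<in> vcarr L" using L.free_keys[OF v] by auto
    then show "f (gP p) = L.gU p"
      by (simp add: gP_def L.gU_def mem_Times_iff f_br s)
  qed
  finally show ?thesis .
qed

lemma alpha_Phi:
  assumes v: "v \<in> free_on (vcarr L)"
  shows "valpha L' (Phi v) = Phi (L.AA v)"
proof -
  have "valpha L' (Phi v) = L'.Lin (\<lambda>p. valpha L' (gP p)) v"
    unfolding Phi_def by (rule lin_Lin[OF L'.vs_axioms L'.vs_axioms L'.lin_alpha gP_in])
  also have "\<dots> = Phi (L.AA v)" unfolding L.AA_def Phi_pmlin
  proof (rule L'.Lin_cong)
    fix p assume "p \<in> Poly_Mapping.keys v"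
    then have p: "fst p \<in> vcarr L" "snd p \<in> vcarr L" using L.free_keys[OF v] by auto
    have "Phi (L.hA p) = vbr L' (s (valpha L (fst p))) (s (valpha L (snd p)))"
      by (simp add: L.hA_def Phi_gen p)
    also have "\<dots> = vbr L' (valpha L' (s (fst p))) (valpha L' (s (snd p)))"
      by (rule s_key) (auto simp: p s f_alpha)
    also have "\<dots> = valpha L' (gP p)" by (simp add: gP_def mem_Times_iff p L'.alpha_br s)
    finally show "valpha L' (gP p) = Phi (L.hA p)" by simp
  qed
  finally show ?thesis .
qed

lemma MM_AA:
  assumes v: "v \<in> free_on (vcarr L')"
  shows "MM (L'.AA v) = L.AA (MM v)"
  unfolding MM_def L'.AA_def L.AA_def pmlin_pmlin
proof (rule pmlin_cong)
  fix p assume "p \<in> Poly_Mapping.keys v"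
  then have p: "fst p \<in> vcarr L'" "snd p \<in> vcarr L'" using L'.free_keys[OF v] by auto
  then show "pmlin hM (L'.hA p) = pmlin L.hA (hM p)"
    by (simp add: hM_def L'.hA_def L.hA_def f_alpha)
qed

lemma MM_add: "MM (v + w) = MM v + MM w" by (simp add: MM_def pmlin_add)
lemma MM_psm: "MM (psm c v) = psm c (MM v)" by (simp add: MM_def pmlin_psm)
lemma MM_diff: "MM (v - w) = MM v - MM w" by (simp add: MM_def pmlin_diff)
lemma MM_gen: "MM (gen a b) = gen (f a) (f b)" by (simp add: MM_def hM_def)

end


context cov begin

lemma uniq:
  assumes d1: "\<delta>1 \<in> Der L'" and d2: "\<delta>2 \<in> Der L'" and e: "\<And>x. x \<in> vcarr L' \<Longrightarrow> f (\<delta>1 x) = f (\<delta>2 x)"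
  shows "\<delta>1 = \<delta>2"
proof (rule Der_eqI[OF d1 d2])
  fix x assume x: "x \<in> vcarr L'"
  have "x \<in> lspan L' L'.Gbr" using x L'.carr_lspan by simp
  then show "\<delta>1 x = \<delta>2 x"
  proof (rule lspan_agree[OF L'.vs_axioms L'.vs_axioms Der_lin[OF d1] Der_lin[OF d2] L'.Gbr_sub, rotated])
    fix g assume "g \<in> L'.Gbr"
    then obtain u v where uv: "u \<in> vcarr L'" "v \<in> vcarr L'" "g = vbr L' (valpha L' u) (valpha L' v)"
      by (auto simp: L'.Gbr_def)
    have a: "valpha L' u \<in> vcarr L'" "valpha L' v \<in> vcarr L'" using uv by auto
    have k1: "vbr L' (valpha L' (valpha L' u)) (\<delta>1 (valpha L' v)) = vbr L' (valpha L' (valpha L' u)) (\<delta>2 (valpha L' v))"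
      by (rule key) (use a d1 d2 e in \<open>auto simp: Der_in\<close>)
    have k2: "vbr L' (\<delta>1 (valpha L' u)) (valpha L' (valpha L' v)) = vbr L' (\<delta>2 (valpha L' u)) (valpha L' (valpha L' v))"
      by (rule key) (use a d1 d2 e in \<open>auto simp: Der_in\<close>)
    show "\<delta>1 g = \<delta>2 g" unfolding uv(3) using a
      by (simp add: Der_br[OF d1] Der_br[OF d2] k1 k2)
  qed
qed

lemma ker_pres:
  assumes d: "d \<in> Der L" and \<delta>: "\<delta> \<in> Der L'" and comm: "\<And>x. x \<in> vcarr L' \<Longrightarrow> f (\<delta> x) = d (f x)"
  shows "\<delta> ` hl_ker L' L f \<subseteq> hl_ker L' L f"
  using d \<delta> comm by (auto simp: in_ker Der_in L.Der_zero)

lemma a_if: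
  assumes d: "d \<in> Der L"
    and hyp: "uce_der L d ` (uce_map L f ` hl_ker (uce L') L' (uceU L')) \<subseteq> uce_map L f ` hl_ker (uce L') L' (uceU L')"
  shows "\<exists>\<delta>\<in>Der L'. \<forall>x\<in>vcarr L'. f (\<delta> x) = d (f x)"
proof -
  let ?F' = "free_on (vcarr L')"
  let ?G = "\<lambda>v. Phi (L.DD d (MM v))"
  have G_add: "?G (v + w) = vadd L' (?G v) (?G w)" for v w
    by (simp add: MM_add L.DD_def pmlin_add Phi_add)
  have G_psm: "?G (psm c v) = vsmult L' c (?G v)" for c v
    by (simp add: MM_psm L.DD_def pmlin_psm Phi_psm)
  have G0: "?G k = vzero L'" if k: "k \<in> ?F'" "L'.Usum k = vzero L'" for k
  proof -
    have Y: "ucls L' k \<in> hl_ker (uce L') L' (uceU L')"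
      using k by (simp add: hl_ker_def L'.ucls_in_uce L'.uceU_ucls)
    then have "uce_der L d (uce_map L f (ucls L' k)) \<in> uce_map L f ` hl_ker (uce L') L' (uceU L')"
      using hyp by blast
    then obtain Y' where Y': "Y' \<in> hl_ker (uce L') L' (uceU L')"
      and e: "uce_der L d (uce_map L f (ucls L' k)) = uce_map L f Y'" by blast
    obtain k' where k': "k' \<in> ?F'" "Y' = ucls L' k'" "L'.Usum k' = vzero L'"
      using Y' by (rule uceU_ker_elim)
    have "ucls L (L.DD d (MM k)) = ucls L (MM k')"
      using e k k' d by (simp add: uce_map_ucls L.uce_der_ucls MM_F)
    then have "L.DD d (MM k) - MM k' \<in> uce_rel L" by (rule ucls_eqD)
    then have "Phi (L.DD d (MM k) - MM k') = vzero L'" by (rule Phi_R)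
    then have "vadd L' (?G k) (vsmult L' (-1) (Phi (MM k'))) = vzero L'" by (simp add: Phi_diff)
    then have "?G k = Phi (MM k')" by (rule L'.diff_zero_eq[rotated 2]) simp_all
    also have "\<dots> = vzero L'" using k' by (simp add: Phi_MM)
    finally show ?thesis .
  qed
  have W: "?G v1 = ?G v2" if v: "v1 \<in> ?F'" "v2 \<in> ?F'" "L'.Usum v1 = L'.Usum v2" for v1 v2
  proof -
    have k: "v1 - v2 \<in> ?F'" "L'.Usum (v1 - v2) = vzero L'"
      using v by (simp_all add: free_on_diff L'.Usum_diff)
    have "?G v1 = ?G (v2 + (v1 - v2))" by simp
    also have "\<dots> = vadd L' (?G v2) (?G (v1 - v2))" by (rule G_add)
    also have "\<dots> = ?G v2" using G0[OF k] by simp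
    finally show ?thesis .
  qed
  define rep where "rep x = (SOME v. v \<in> ?F' \<and> L'.Usum v = x)" for x
  have rep: "rep x \<in> ?F'" "L'.Usum (rep x) = x" if "x \<in> vcarr L'" for x
    using L'.Usum_rep_ex[OF that] by (simp_all add: rep_def)
  define \<delta> where "\<delta> = (\<lambda>x\<in>vcarr L'. ?G (rep x))"
  have \<delta>U: "\<delta> (L'.Usum v) = ?G v" if v: "v \<in> ?F'" for v
  proof -
    have "\<delta> (L'.Usum v) = ?G (rep (L'.Usum v))" by (simp add: \<delta>_def)
    also have "\<dots> = ?G v" by (rule W) (use rep[of "L'.Usum v"] v in auto)
    finally show ?thesis .
  qed
  have pre: "\<exists>v\<in>?F'. L'.Usum v = x" if "x \<in> vcarr L'" for x
    using L'.Usum_surj that by blast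
  have DM: "L.DD d (MM v) \<in> free_on (vcarr L)" if "v \<in> ?F'" for v
    using that d by (simp add: L.DD_F MM_F)
  have comm: "f (\<delta> x) = d (f x)" if x: "x \<in> vcarr L'" for x
  proof -
    obtain v where v: "v \<in> ?F'" "L'.Usum v = x" using pre x by blast
    have "f (\<delta> x) = L.Usum (L.DD d (MM v))" using v \<delta>U DM f_Phi by metis
    also have "\<dots> = d (f x)" using v d by (simp add: L.Usum_DD MM_F Usum_MM)
    finally show ?thesis .
  qed
  have "\<delta> \<in> Der L'"
  proof (rule DerI)
    show "\<delta> \<in> extensional (vcarr L')" by (simp add: \<delta>_def)
  next
    fix x assume "x \<in> vcarr L'"
    then obtain v where v: "v \<in> ?F'" "L'.Usum v = x" using pre by blast
    show "\<delta> x \<in> vcarr L'" using v \<delta>U by auto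
    fix c show "\<delta> (vsmult L' c x) = vsmult L' c (\<delta> x)"
      using v \<delta>U[of v] \<delta>U[of "psm c v"] by (simp add: free_on_psm L'.Usum_psm G_psm)
    have "\<delta> (valpha L' x) = ?G (L'.AA v)" using v \<delta>U[of "L'.AA v"] by (simp add: L'.AA_F L'.Usum_AA)
    also have "\<dots> = Phi (L.AA (L.DD d (MM v)))"
      using v d by (simp add: MM_AA L.DD_AA MM_F)
    also have "\<dots> = valpha L' (?G v)" using DM[OF v(1)] by (simp add: alpha_Phi)
    also have "\<dots> = valpha L' (\<delta> x)" using v \<delta>U[OF v(1)] by simp
    finally show "\<delta> (valpha L' x) = valpha L' (\<delta> x)" .
  next
    fix x y assume x: "x \<in> vcarr L'" and y: "y \<in> vcarr L'"
    obtain v where v: "v \<in> ?F'" "L'.Usum v = x" using pre x by blast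
    obtain w where w: "w \<in> ?F'" "L'.Usum w = y" using pre y by blast
    show "\<delta> (vadd L' x y) = vadd L' (\<delta> x) (\<delta> y)"
      using v w \<delta>U[of v] \<delta>U[of w] \<delta>U[of "v + w"] by (simp add: free_on_add L'.Usum_add G_add)
    have dx: "\<delta> x \<in> vcarr L'" "\<delta> y \<in> vcarr L'" using v w \<delta>U by auto
    have fx: "f x \<in> vcarr L" "f y \<in> vcarr L" using x y by auto
    have dfx: "d (f x) \<in> vcarr L" "d (f y) \<in> vcarr L" using fx d by (auto simp: Der_in)
    have "\<delta> (vbr L' x y) = ?G (gen x y)"
      using \<delta>U[of "gen x y"] x y by (simp add: free_on_gen L'.Usum_gen)
    also have "\<dots> = vadd L' (vbr L' (s (d (f x))) (s (valpha L (f y)))) (vbr L' (s (valpha L (f x))) (s (d (f y))))"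
      using fx dfx by (simp add: MM_gen L.DD_gen Phi_add Phi_gen)
    also have "vbr L' (s (d (f x))) (s (valpha L (f y))) = vbr L' (\<delta> x) (valpha L' y)"
      by (rule s_key) (use dx y x dfx fx comm in \<open>auto simp: f_alpha\<close>)
    also have "vbr L' (s (valpha L (f x))) (s (d (f y))) = vbr L' (valpha L' x) (\<delta> y)"
      by (rule s_key) (use dx y x dfx fx comm in \<open>auto simp: f_alpha\<close>)
    finally show "\<delta> (vbr L' x y) = vadd L' (vbr L' (valpha L' x) (\<delta> y)) (vbr L' (\<delta> x) (valpha L' y))"
      using dx x y by (simp add: L'.add_comm)
  qed
  then show ?thesis using comm by blast
qed

end


context cov begin

abbreviation "CC \<equiv> uce_map L f ` hl_ker (uce L') L' (uceU L')"

lemma ex_unique: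
  assumes d: "d \<in> Der L" and S: "uce_der L d ` CC \<subseteq> CC"
  shows "\<exists>!\<delta>. \<delta> \<in> Der L' \<and> (\<forall>x\<in>vcarr L'. f (\<delta> x) = d (f x))"
proof -
  obtain \<delta> where "\<delta> \<in> Der L'" "\<forall>x\<in>vcarr L'. f (\<delta> x) = d (f x)" using a_if[OF d S] by blast
  moreover have "\<delta>1 = \<delta>2" if "\<delta>1 \<in> Der L' \<and> (\<forall>x\<in>vcarr L'. f (\<delta>1 x) = d (f x))"
    "\<delta>2 \<in> Der L' \<and> (\<forall>x\<in>vcarr L'. f (\<delta>2 x) = d (f x))" for \<delta>1 \<delta>2
    using that by (intro uniq) auto
  ultimately show ?thesis by blast
qed

lemma lift_spec:
  assumes d: "d \<in> Der L" and S: "uce_der L d ` CC \<subseteq> CC"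
  shows "lift_der L' f d \<in> Der L'" "\<forall>x\<in>vcarr L'. f (lift_der L' f d x) = d (f x)"
  using theI'[OF ex_unique[OF d S]] unfolding lift_der_def by auto

lemma lift_eq:
  assumes "\<delta> \<in> Der L'" "\<forall>x\<in>vcarr L'. f (\<delta> x) = d (f x)"
  shows "lift_der L' f d = \<delta>"
  unfolding lift_der_def
  by (rule the_equality) (use assms in \<open>auto intro: uniq\<close>)

theorem part_a:
  "\<forall>d\<in>Der L.
     ((\<exists>\<delta>\<in>Der L'. \<forall>x\<in>vcarr L'. f (\<delta> x) = d (f x)) \<longleftrightarrow> uce_der L d ` CC \<subseteq> CC) \<and>
     (\<forall>\<delta>1\<in>Der L'. \<forall>\<delta>2\<in>Der L'.
        (\<forall>x\<in>vcarr L'. f (\<delta>1 x) = d (f x)) \<and> (\<forall>x\<in>vcarr L'. f (\<delta>2 x) = d (f x)) \<longrightarrow> \<delta>1 = \<delta>2) \<and>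
     (\<forall>\<delta>\<in>Der L'. (\<forall>x\<in>vcarr L'. f (\<delta> x) = d (f x)) \<longrightarrow> \<delta> ` hl_ker L' L f \<subseteq> hl_ker L' L f)"
proof (intro ballI conjI impI iffI)
  fix d assume d: "d \<in> Der L"
  show "uce_der L d ` CC \<subseteq> CC" if "\<exists>\<delta>\<in>Der L'. \<forall>x\<in>vcarr L'. f (\<delta> x) = d (f x)"
    using that a_only_if[OF d] by blast
  show "\<exists>\<delta>\<in>Der L'. \<forall>x\<in>vcarr L'. f (\<delta> x) = d (f x)" if "uce_der L d ` CC \<subseteq> CC"
    using a_if[OF d that] .
  fix \<delta>1 \<delta>2 assume "\<delta>1 \<in> Der L'" "\<delta>2 \<in> Der L'"
    "(\<forall>x\<in>vcarr L'. f (\<delta>1 x) = d (f x)) \<and> (\<forall>x\<in>vcarr L'. f (\<delta>2 x) = d (f x))"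
  then show "\<delta>1 = \<delta>2" by (intro uniq) auto
next
  fix d \<delta> assume "d \<in> Der L" "\<delta> \<in> Der L'" "\<forall>x\<in>vcarr L'. f (\<delta> x) = d (f x)"
  then show "\<delta> ` hl_ker L' L f \<subseteq> hl_ker L' L f" by (intro ker_pres) auto
qed

lemma fiber:
  assumes \<rho>: "\<rho> \<in> Der L'" and k: "\<rho> ` hl_ker L' L f \<subseteq> hl_ker L' L f"
    and x: "x \<in> vcarr L'" and x': "x' \<in> vcarr L'" and e: "f x = f x'"
  shows "f (\<rho> x) = f (\<rho> x')"
proof -
  let ?k = "vadd L' x (vsmult L' (-1) x')"
  have kc: "?k \<in> vcarr L'" using x x' by simp
  have "f ?k = vzero L" using x x' e by (simp add: f_add f_sm)
  then have "?k \<in> hl_ker L' L f" using kc by (simp add: in_ker)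
  then have "\<rho> ?k \<in> hl_ker L' L f" using k by blast
  then have fk: "f (\<rho> ?k) = vzero L" by (simp add: in_ker)
  have "x = vadd L' x' ?k" using L'.decomp[OF x x'] .
  then have "f (\<rho> x) = f (vadd L' (\<rho> x') (\<rho> ?k))" using \<rho> x' kc by (metis Der_add)
  also have "\<dots> = f (\<rho> x')" using fk \<rho> x' kc by (simp add: f_add Der_in)
  finally show ?thesis .
qed

lemma descend:
  assumes \<rho>: "\<rho> \<in> Der L'" and k: "\<rho> ` hl_ker L' L f \<subseteq> hl_ker L' L f"
  shows "\<exists>d\<in>Der L. \<forall>x\<in>vcarr L'. f (\<rho> x) = d (f x)"
proof -
  define d where "d = (\<lambda>y\<in>vcarr L. f (\<rho> (s y)))"
  have comm: "d (f x) = f (\<rho> x)" if x: "x \<in> vcarr L'" for x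
    using x fiber[OF \<rho> k, of "s (f x)" x] by (simp add: d_def s)
  have pre: "\<exists>x\<in>vcarr L'. y = f x" if "y \<in> vcarr L" for y
    using that surj by auto
  have "d \<in> Der L"
  proof (rule DerI)
    show "d \<in> extensional (vcarr L)" by (simp add: d_def)
  next
    fix y assume "y \<in> vcarr L"
    then obtain x where x: "x \<in> vcarr L'" "y = f x" using pre by blast
    show "d y \<in> vcarr L" using x comm \<rho> by (simp add: Der_in)
    fix c
    have "d (vsmult L c y) = d (f (vsmult L' c x))" using x by (simp add: f_sm)
    also have "\<dots> = f (\<rho> (vsmult L' c x))" using x by (simp add: comm)
    also have "\<dots> = vsmult L c (d y)" using x \<rho> comm[of x] by (simp add: Der_sm Der_in f_sm)
    finally show "d (vsmult L c y) = vsmult L c (d y)" .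
    have "d (valpha L y) = d (f (valpha L' x))" using x by (simp add: f_alpha)
    also have "\<dots> = f (\<rho> (valpha L' x))" using x by (simp add: comm)
    also have "\<dots> = valpha L (d y)" using x \<rho> comm[of x] by (simp add: Der_alpha Der_in f_alpha)
    finally show "d (valpha L y) = valpha L (d y)" .
  next
    fix y y' assume "y \<in> vcarr L" "y' \<in> vcarr L"
    then obtain x x' where x: "x \<in> vcarr L'" "y = f x" and x': "x' \<in> vcarr L'" "y' = f x'" using pre by metis
    have "d (vadd L y y') = d (f (vadd L' x x'))" using x x' by (simp add: f_add)
    also have "\<dots> = f (\<rho> (vadd L' x x'))" using x x' by (simp add: comm)
    also have "\<dots> = vadd L (d y) (d y')" using x x' \<rho> comm[of x] comm[of x'] by (simp add: Der_add Der_in f_add)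
    finally show "d (vadd L y y') = vadd L (d y) (d y')" .
    have "d (vbr L y y') = d (f (vbr L' x x'))" using x x' by (simp add: f_br)
    also have "\<dots> = f (\<rho> (vbr L' x x'))" using x x' by (simp add: comm)
    also have "\<dots> = vadd L (vbr L (valpha L y) (d y')) (vbr L (d y) (valpha L y'))"
      using x x' \<rho> comm[of x] comm[of x'] by (simp add: Der_br Der_in f_add f_br f_alpha)
    finally show "d (vbr L y y') = vadd L (vbr L (valpha L y) (d y')) (vbr L (d y) (valpha L y'))" .
  qed
  then show ?thesis by (intro bexI[of _ d] ballI) (simp_all add: comm)
qed

theorem part_b:
  "der_lin_iso L L' {d \<in> Der L. uce_der L d ` CC \<subseteq> CC}
     {\<rho> \<in> Der L'. \<rho> ` hl_ker L' L f \<subseteq> hl_ker L' L f} (lift_der L' f)"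
  unfolding der_lin_iso_def
proof (intro conjI ballI allI)
  show "bij_betw (lift_der L' f) {d \<in> Der L. uce_der L d ` CC \<subseteq> CC}
     {\<rho> \<in> Der L'. \<rho> ` hl_ker L' L f \<subseteq> hl_ker L' L f}"
    unfolding bij_betw_def
  proof (intro conjI)
    show "inj_on (lift_der L' f) {d \<in> Der L. uce_der L d ` CC \<subseteq> CC}"
    proof (rule inj_onI)
      fix d1 d2 assume d1: "d1 \<in> {d \<in> Der L. uce_der L d ` CC \<subseteq> CC}" and d2: "d2 \<in> {d \<in> Der L. uce_der L d ` CC \<subseteq> CC}"
        and e: "lift_der L' f d1 = lift_der L' f d2"
      show "d1 = d2"
      proof (rule Der_eqI)
        show "d1 \<in> Der L" "d2 \<in> Der L" using d1 d2 by auto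
        fix y assume "y \<in> vcarr L"
        then obtain x where x: "x \<in> vcarr L'" "y = f x" using surj by auto
        show "d1 y = d2 y"
          using lift_spec(2)[of d1] lift_spec(2)[of d2] d1 d2 x e by auto
      qed
    qed
    show "lift_der L' f ` {d \<in> Der L. uce_der L d ` CC \<subseteq> CC} = {\<rho> \<in> Der L'. \<rho> ` hl_ker L' L f \<subseteq> hl_ker L' L f}"
    proof
      show "lift_der L' f ` {d \<in> Der L. uce_der L d ` CC \<subseteq> CC} \<subseteq> {\<rho> \<in> Der L'. \<rho> ` hl_ker L' L f \<subseteq> hl_ker L' L f}"
      proof (rule image_subsetI)
        fix d assume "d \<in> {d \<in> Der L. uce_der L d ` CC \<subseteq> CC}"
        then have d: "d \<in> Der L" "uce_der L d ` CC \<subseteq> CC" by auto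
        show "lift_der L' f d \<in> {\<rho> \<in> Der L'. \<rho> ` hl_ker L' L f \<subseteq> hl_ker L' L f}"
          using lift_spec[OF d] ker_pres[OF d(1), of "lift_der L' f d"] by auto
      qed
      show "{\<rho> \<in> Der L'. \<rho> ` hl_ker L' L f \<subseteq> hl_ker L' L f} \<subseteq> lift_der L' f ` {d \<in> Der L. uce_der L d ` CC \<subseteq> CC}"
      proof
        fix \<rho> assume "\<rho> \<in> {\<rho> \<in> Der L'. \<rho> ` hl_ker L' L f \<subseteq> hl_ker L' L f}"
        then have \<rho>: "\<rho> \<in> Der L'" "\<rho> ` hl_ker L' L f \<subseteq> hl_ker L' L f" by auto
        obtain d where d: "d \<in> Der L" "\<forall>x\<in>vcarr L'. f (\<rho> x) = d (f x)" using descend[OF \<rho>] by blast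
        have "uce_der L d ` CC \<subseteq> CC" using a_only_if[OF d(1) \<rho>(1)] d(2) by blast
        moreover have "lift_der L' f d = \<rho>" by (rule lift_eq) (use \<rho> d in auto)
        ultimately show "\<rho> \<in> lift_der L' f ` {d \<in> Der L. uce_der L d ` CC \<subseteq> CC}" using d by force
      qed
    qed
  qed
next
  fix d1 d2 assume d1: "d1 \<in> {d \<in> Der L. uce_der L d ` CC \<subseteq> CC}" and d2: "d2 \<in> {d \<in> Der L. uce_der L d ` CC \<subseteq> CC}"
  have s1: "lift_der L' f d1 \<in> Der L'" "\<forall>x\<in>vcarr L'. f (lift_der L' f d1 x) = d1 (f x)"
    using d1 lift_spec by auto
  have s2: "lift_der L' f d2 \<in> Der L'" "\<forall>x\<in>vcarr L'. f (lift_der L' f d2 x) = d2 (f x)"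
    using d2 lift_spec by auto
  show "lift_der L' f (der_add L d1 d2) = der_add L' (lift_der L' f d1) (lift_der L' f d2)"
  proof (rule lift_eq)
    show "der_add L' (lift_der L' f d1) (lift_der L' f d2) \<in> Der L'"
      using s1 s2 by (simp add: L'.Der_closed_add)
    show "\<forall>x\<in>vcarr L'. f (der_add L' (lift_der L' f d1) (lift_der L' f d2) x) = der_add L d1 d2 (f x)"
      using s1 s2 by (simp add: der_add_def f_add Der_in)
  qed
next
  fix c d assume d: "d \<in> {d \<in> Der L. uce_der L d ` CC \<subseteq> CC}"
  have s1: "lift_der L' f d \<in> Der L'" "\<forall>x\<in>vcarr L'. f (lift_der L' f d x) = d (f x)"
    using d lift_spec by auto
  show "lift_der L' f (der_smult L c d) = der_smult L' c (lift_der L' f d)"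
  proof (rule lift_eq)
    show "der_smult L' c (lift_der L' f d) \<in> Der L'"
      using s1 by (simp add: L'.Der_closed_sm)
    show "\<forall>x\<in>vcarr L'. f (der_smult L' c (lift_der L' f d) x) = der_smult L c d (f x)"
      using s1 by (simp add: der_smult_def f_sm Der_in)
  qed
qed

end


lemma perfect_image:
  assumes hL: "hl L" and pL': "pf L'" and hom: "hl_hom L' L f" and surj: "f ` vcarr L' = vcarr L"
  shows "alpha_perfect L"
proof -
  interpret L: hl L by fact
  interpret L': pf L' by fact
  let ?G = "{vbr L (valpha L x) (valpha L y) | x y. x \<in> vcarr L \<and> y \<in> vcarr L}"
  have lf: "lin_on L' L f" using hom by (simp add: lin_on_def hl_hom_def)
  have fin: "x \<in> vcarr L' \<Longrightarrow> f x \<in> vcarr L" for x using hom by (simp add: hl_hom_def)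
  have Gs: "?G \<subseteq> vcarr L" by auto
  have "f x \<in> lspan L ?G" if "x \<in> lspan L' L'.Gbr" for x
    using that
  proof (induction rule: lspan.induct)
    case lspan_zero
    then show ?case using lin_zero[OF L'.vs_axioms L.vs_axioms lf] lspan.lspan_zero by metis
  next
    case (lspan_gen g)
    then obtain u v where uv: "u \<in> vcarr L'" "v \<in> vcarr L'" "g = vbr L' (valpha L' u) (valpha L' v)"
      by (auto simp: L'.Gbr_def)
    then have "f g = vbr L (valpha L (f u)) (valpha L (f v))"
      using hom by (simp add: hl_hom_def)
    then show ?case using uv fin by (auto intro!: lspan.lspan_gen)
  next
    case (lspan_add x y)
    have "x \<in> vcarr L'" "y \<in> vcarr L'" using lspan_add(1,2) lspan_sub[OF L'.vs_axioms L'.Gbr_sub] by auto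
    then show ?case using lspan_add hom by (simp add: hl_hom_def lspan.lspan_add)
  next
    case (lspan_smult x c)
    have "x \<in> vcarr L'" using lspan_smult(1) lspan_sub[OF L'.vs_axioms L'.Gbr_sub] by auto
    then show ?case using lspan_smult hom by (simp add: hl_hom_def lspan.lspan_smult)
  qed
  note fl = this
  have "vcarr L \<subseteq> lspan L ?G"
  proof
    fix y assume "y \<in> vcarr L"
    then obtain x where "x \<in> vcarr L'" "y = f x" using surj by auto
    then show "y \<in> lspan L ?G" using fl L'.carr_lspan by auto
  qed
  moreover have "lspan L ?G \<subseteq> vcarr L" by (rule lspan_sub[OF L.vs_axioms Gs])
  ultimately show ?thesis unfolding alpha_perfect_def by blast
qed

theorem theorem4p5:
  fixes L :: "('k::field, 'a) hlalg" and L' :: "('k, 'b) hlalg" and f :: "'b \<Rightarrow> 'a"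
  assumes "hom_leibniz L" and "hom_leibniz L'" and "alpha_cover L' L f"
  defines "C \<equiv> uce_map L f ` hl_ker (uce L') L' (uceU L')"
  shows "(\<forall>d\<in>Der L.
            ((\<exists>\<delta>\<in>Der L'. \<forall>x\<in>vcarr L'. f (\<delta> x) = d (f x)) \<longleftrightarrow> uce_der L d ` C \<subseteq> C) \<and>
            (\<forall>\<delta>1\<in>Der L'. \<forall>\<delta>2\<in>Der L'.
               (\<forall>x\<in>vcarr L'. f (\<delta>1 x) = d (f x)) \<and> (\<forall>x\<in>vcarr L'. f (\<delta>2 x) = d (f x))
               \<longrightarrow> \<delta>1 = \<delta>2) \<and>
            (\<forall>\<delta>\<in>Der L'. (\<forall>x\<in>vcarr L'. f (\<delta> x) = d (f x))
               \<longrightarrow> \<delta> ` hl_ker L' L f \<subseteq> hl_ker L' L f))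
       \<and> der_lin_iso L L' {d \<in> Der L. uce_der L d ` C \<subseteq> C}
            {\<rho> \<in> Der L'. \<rho> ` hl_ker L' L f \<subseteq> hl_ker L' L f} (lift_der L' f)
       \<and> der_lin_iso L (uce L) (Der L)
            {\<delta> \<in> Der (uce L). \<delta> ` hl_ker (uce L) L (uceU L) \<subseteq> hl_ker (uce L) L (uceU L)}
            (uce_der L)"
proof -
  have vsL: "vs L" and vsL': "vs L'"
    using assms(1,2) by (simp_all add: vs_def hom_leibniz_def)
  have hlL: "hl L" using vsL assms(1) by (simp add: hl_def hl_axioms_def)
  have hlL': "hl L'" using vsL' assms(2) by (simp add: hl_def hl_axioms_def)
  have cov: "central_ext L' L f" "alpha_perfect L'" using assms(3) by (simp_all add: alpha_cover_def)
  have pfL': "pf L'" using hlL' cov(2) by (simp add: pf_def pf_axioms_def)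
  have hom: "hl_hom L' L f" and surj: "f ` vcarr L' = vcarr L" and kerc: "hl_ker L' L f \<subseteq> hl_center L'"
    using cov(1) by (simp_all add: central_ext_def)
  have pfL: "pf L" using hlL perfect_image[OF hlL pfL' hom surj] by (simp add: pf_def pf_axioms_def)
  interpret cv: cov L L' f
    by (simp add: cov_def cov_axioms_def pfL pfL' hom surj kerc)
  show ?thesis unfolding C_def using cv.part_a cv.part_b cv.L.part_c by blast
qed


end
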